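(* Let $(V_{cl},V_{op},m_{cl-op})$ be an open-closed field algebra. Then for every $u\in V_{cl}$ and $z\in\mathbb{H}$, as maps $V_{op}\to\overline{V_{op}}$, $$[D_{op},\mathbb{Y}_{cl-op}(u;z,\bar z)]=\mathbb{Y}_{cl-op}((D^L_{cl}+D^R_{cl})u;z,\bar z),$$ $$\mathbb{Y}_{cl-op}(D^L_{cl}u;z,\bar z)=\frac{\partial}{\partial z}\mathbb{Y}_{cl-op}(u;z,\bar z),\qquad \mathbb{Y}_{cl-op}(D^R_{cl}u;z,\bar z)=\frac{\partial}{\partial \bar z}\mathbb{Y}_{cl-op}(u;z,\bar z),$$ where $\partial/\partial z,\partial/\partial\bar z$ are the Wirtinger derivatives.
   Context: Notation: $\mathbb{H}=\{z\in\mathbb{C}:\mathrm{Im}\,z>0\}$; $\Lambda^n=\{(r_1,\dots,r_n)\in\mathbb{R}^n: r_1>\dots>r_n\ge 0\}$; $M^n_{\mathbb{H}}$ (resp. $M^n_{\mathbb{C}}$) is the set of $n$-tuples of pairwise distinct points of $\mathbb{H}$ (resp. $\mathbb{C}$). For a vector space $F=\oplus_{g\in G}F_{(g)}$ graded by an abelian group $G$, $\overline F=\prod_g F_{(g)}$, $P_g$ is the projection onto $F_{(g)}$, and $F'=\oplus_g F_{(g)}^*$. A ($\mathbb{R}\times\mathbb{R}$-graded) full field algebra is a vector space $V_{cl}=\oplus_{m,n\in\mathbb{R}}(V_{cl})_{(m,n)}$ with grading operators $\mathbf{d}^L_{cl},\mathbf{d}^R_{cl}$, operators $D^L_{cl},D^R_{cl}$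 of weights $(1,0),(0,1)$, and maps $m_{cl}^{(n)}:V_{cl}^{\otimes n}\times M^n_{\mathbb{C}}\to\overline{V_{cl}}$, written $m^{(n)}_{cl}(u_1,\dots,u_n;z_1,\bar z_1,\dots,z_n,\bar z_n)$, such that: $e^{2\pi i(\mathbf{d}^L_{cl}-\mathbf{d}^R_{cl})}=\mathrm{id}$; $m^{(n)}_{cl}$ is linear in the $u_j$ and smooth in the $z_j$; $m^{(1)}_{cl}(u;0,0)=u$ and $\mathbf{1}_{cl}:=m^{(0)}_{cl}(1)\in(V_{cl})_{(0,0)}$; (convergence) for $1\le i\le n$, $\sum_{p,q}m^{(n)}_{cl}(u_1,\dots,u_{i-1},P_{(p,q)}m^{(k)}_{cl}(\tilde u_1,\dots,\tilde u_k;w_1,\bar w_1,\dots,w_k,\bar w_k),u_{i+1},\dots,u_n;z_1,\bar z_1,\dots)$ converges absolutely, when $|w_p|<|z_i-z_j|$ for all $j\neq i$ and all $p$, to $m^{(n+k-1)}_{cl}$ at $(u_1,\dots,u_{i-1},\tilde u_1,\dots,\tilde u_k,u_{i+1},\dots,u_n)$ and points $z_1,\dots,z_{i-1},z_i+w_1,\dots,z_i+w_k,z_{i+1},\dots,z_n$; permutation invariance; for $a\in\mathbb{C}$, $e^{a\mathbf{d}^L_{cl}}e^{\bar a\mathbf{d}^R_{cl}}m^{(n)}_{cl}(u_j;z_j,\bar z_j)=m^{(n)}_{cl}(e^{a\mathbf{d}^L_{cl}}e^{\bar a\mathbf{d}^R_{cl}}u_j;e^az_j,e^{\bar a}\bar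 z_j)$; $[D^L_{cl},D^R_{cl}]=0$ and $e^{aD^L_{cl}}e^{\bar aD^R_{cl}}m^{(n)}_{cl}(u_j;z_j,\bar z_j)=m^{(n)}_{cl}(u_j;z_j+a,\bar z_j+\bar a)$. An open-closed field algebra $(V_{cl},V_{op},m_{cl-op})$ consists of a full field algebra $V_{cl}$, a vector space $V_{op}=\oplus_{n\in\mathbb{R}}(V_{op})_{(n)}$ with grading operator $\mathbf{d}_{op}$, an operator $D_{op}\in\mathrm{End}\,V_{op}$, and maps $m^{(l;n)}_{cl-op}:V_{cl}^{\otimes l}\otimes V_{op}^{\otimes n}\times M^l_{\mathbb{H}}\times\Lambda^n\to\overline{V_{op}}$, written $m^{(l;n)}_{cl-op}(u_1,\dots,u_l;v_1,\dots,v_n;z_1,\bar z_1,\dots,z_l,\bar z_l;r_1,\dots,r_n)$, such that: (1) linearity in vectors, smoothness in $r$'s, $z$'s; (2) $m^{(0;1)}_{cl-op}(v;0)=v$ and $\mathbf{1}_{op}:=m^{(0;0)}_{cl-op}(1)\in(V_{op})_{(0)}$; (3a) for $1\le i\le n$, $\sum_{s}m^{(l;n)}_{cl-op}(u_1,\dots,u_l;v_1,\dots,v_{i-1},P_s m^{(k;m)}_{cl-op}(\tilde u_1,\dots,\tilde u_k;\tilde v_1,\dots,\tilde v_m;w_1,\bar w_1,\dots;s_1,\dots,s_m),v_{i+1},\dots,v_n;z_j,\bar z_j;r_1,\dots,r_n)$ converges absolutely when $|z_j-r_i|,|r_t-r_i|>|w_p|,s_q\ge0$ ($t\ne i$) to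 $m^{(l+k;n+m-1)}_{cl-op}(u_1,\dots,u_l,\tilde u_1,\dots,\tilde u_k;v_1,\dots,v_{i-1},\tilde v_1,\dots,\tilde v_m,v_{i+1},\dots,v_n;z_j,\bar z_j,r_i+w_p,\overline{r_i+w_p};r_1,\dots,r_{i-1},r_i+s_1,\dots,r_i+s_m,r_{i+1},\dots,r_n)$; (3b) for $1\le i\le l$, $\sum_{p,q}m^{(l;n)}_{cl-op}(u_1,\dots,u_{i-1},P_{(p,q)}m^{(k)}_{cl}(\tilde u_1,\dots,\tilde u_k;w_1,\bar w_1,\dots),u_{i+1},\dots,u_l;v_t;z_j,\bar z_j;r_t)$ converges absolutely when $|z_j-z_i|,|r_t-z_i|>|w_p|$ ($j\ne i$) to $m^{(l+k-1;n)}_{cl-op}$ with closed vectors $u_1,\dots,u_{i-1},\tilde u_1,\dots,\tilde u_k,u_{i+1},\dots,u_l$ at points $z_1,\dots,z_{i-1},z_i+w_1,\dots,z_i+w_k,z_{i+1},\dots,z_l$; (4) invariance under simultaneous permutation of the $u_j$ and $z_j$; (5) for $a\in\mathbb{R}$, $e^{a\mathbf{d}_{op}}m^{(l;n)}_{cl-op}(u_j;v_t;z_j,\bar z_j;r_t)=m^{(l;n)}_{cl-op}(e^{a(\mathbf{d}^L_{cl}+\mathbf{d}^R_{cl})}u_j;e^{a\mathbf{d}_{op}}v_t;e^az_j,e^a\bar z_j;e^ar_t)$; (6) for $a\in\mathbb{R}$ with $r_n+a\ge0$, $e^{aD_{op}}m^{(l;n)}_{cl-op}(u_j;v_t;z_j,\bar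 z_j;r_t)=m^{(l;n)}_{cl-op}(u_j;v_t;z_j+a,\bar z_j+a;r_t+a)$. Define $\mathbb{Y}_{cl-op}(u;z,\bar z)v:=m^{(1;1)}_{cl-op}(u;v;z,\bar z;0)$ for $u\in V_{cl}$, $v\in V_{op}$, $z\in\mathbb{H}$. *)

theory Defs
  imports "HOL-Analysis.Analysis"
begin

text \<open>A complex vector space F (type 'v, scalar multiplication s) graded by an abelian
group 'g is encoded by the family of projections P g onto the homogeneous components
F_(g) = range (P g).  The completion (overline F) = prod_g F_(g) is encoded by functions
f :: 'g => 'v with f g in F_(g); the component P_g of f is f g.  The restricted dual
F' = oplus_g F_(g)^* is the set of linear functionals vanishing on all but finitely many
homogeneous components; it pairs with the completion.\<close>

definition graded_vs :: "(complex \<Rightarrow> 'v::ab_group_add \<Rightarrow> 'v) \<Rightarrow> ('g \<Rightarrow> 'v \<Rightarrow> 'v) \<Rightarrow> bool" where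
  "graded_vs s P \<longleftrightarrow>
     Vector_Spaces.vector_space s \<and>
     (\<forall>g. Vector_Spaces.linear s s (P g)) \<and>
     (\<forall>g h v. P g (P h v) = (if g = h then P g v else 0)) \<and>
     (\<forall>v. finite {g. P g v \<noteq> 0} \<and> v = (\<Sum>g\<in>{g. P g v \<noteq> 0}. P g v))"

definition in_cpl :: "('g \<Rightarrow> 'v \<Rightarrow> 'v) \<Rightarrow> ('g \<Rightarrow> 'v) \<Rightarrow> bool" where
  "in_cpl P f \<longleftrightarrow> (\<forall>g. f g \<in> range (P g))"

definition emb :: "('g \<Rightarrow> 'v \<Rightarrow> 'v) \<Rightarrow> 'v \<Rightarrow> ('g \<Rightarrow> 'v)" where
  "emb P v = (\<lambda>g. P g v)"

definition rdual :: "(complex \<Rightarrow> 'v::ab_group_add \<Rightarrow> 'v) \<Rightarrow> ('g \<Rightarrow> 'v \<Rightarrow> 'v) \<Rightarrow> ('v \<Rightarrow> complex) \<Rightarrow> bool" where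
  "rdual s P \<phi> \<longleftrightarrow> Vector_Spaces.linear s (*) \<phi> \<and> finite {g. \<exists>v. \<phi> (P g v) \<noteq> 0}"

definition pair :: "('g \<Rightarrow> 'v \<Rightarrow> 'v) \<Rightarrow> ('v \<Rightarrow> complex) \<Rightarrow> ('g \<Rightarrow> 'v) \<Rightarrow> complex" where
  "pair P \<phi> f = (\<Sum>g\<in>{g. \<exists>v. \<phi> (P g v) \<noteq> 0}. \<phi> (f g))"

text \<open>Graded scalar operator (e.g. e^{a d}) acting by the scalar c g on the component g,
on vectors and on the completion.\<close>

definition gscaleV :: "(complex \<Rightarrow> 'v::ab_group_add \<Rightarrow> 'v) \<Rightarrow> ('g \<Rightarrow> 'v \<Rightarrow> 'v) \<Rightarrow> ('g \<Rightarrow> complex) \<Rightarrow> 'v \<Rightarrow> 'v" where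
  "gscaleV s P c v = (\<Sum>g\<in>{g. P g v \<noteq> 0}. s (c g) (P g v))"

definition gscale :: "(complex \<Rightarrow> 'v \<Rightarrow> 'v) \<Rightarrow> ('g \<Rightarrow> complex) \<Rightarrow> ('g \<Rightarrow> 'v) \<Rightarrow> ('g \<Rightarrow> 'v)" where
  "gscale s c f = (\<lambda>g. s (c g) (f g))"

text \<open>Extensions to the completions of the operators D^L (weight (1,0)), D^R (weight (0,1))
and D_op (weight 1).\<close>

definition extL :: "('c \<Rightarrow> 'c) \<Rightarrow> (real \<times> real \<Rightarrow> 'c) \<Rightarrow> (real \<times> real \<Rightarrow> 'c)" where
  "extL D f = (\<lambda>(p, q). D (f (p - 1, q)))"

definition extR :: "('c \<Rightarrow> 'c) \<Rightarrow> (real \<times> real \<Rightarrow> 'c) \<Rightarrow> (real \<times> real \<Rightarrow> 'c)" where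
  "extR D f = (\<lambda>(p, q). D (f (p, q - 1)))"

definition extO :: "('o \<Rightarrow> 'o) \<Rightarrow> (real \<Rightarrow> 'o) \<Rightarrow> (real \<Rightarrow> 'o)" where
  "extO D f = (\<lambda>n. D (f (n - 1)))"

definition Mc :: "nat \<Rightarrow> complex list set" where
  "Mc n = {zs. length zs = n \<and> distinct zs}"

definition MH :: "nat \<Rightarrow> complex list set" where
  "MH n = {zs. zs \<in> Mc n \<and> (\<forall>z\<in>set zs. Im z > 0)}"

definition Lam :: "nat \<Rightarrow> real list set" where
  "Lam n = {rs. length rs = n \<and> sorted_wrt (>) rs \<and> (\<forall>r\<in>set rs. r \<ge> 0)}"

definition coords :: "complex list \<Rightarrow> real list" where
  "coords zs = concat (map (\<lambda>z. [Re z, Im z]) zs)"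

definition decode :: "real list \<Rightarrow> complex list" where
  "decode xs = map (\<lambda>j. Complex (xs ! (2 * j)) (xs ! (2 * j + 1))) [0..<length xs div 2]"

definition lcont :: "real list set \<Rightarrow> (real list \<Rightarrow> complex) \<Rightarrow> bool" where
  "lcont S F \<longleftrightarrow> (\<forall>xs\<in>S. \<forall>e>0. \<exists>d>0. \<forall>ys\<in>S.
      (length ys = length xs \<and> (\<forall>j<length xs. \<bar>ys ! j - xs ! j\<bar> < d)) \<longrightarrow> cmod (F ys - F xs) < e)"

definition pdir :: "real list set \<Rightarrow> nat \<Rightarrow> (real list \<Rightarrow> complex) \<Rightarrow> real list \<Rightarrow> complex" where
  "pdir S j F xs = vector_derivative (\<lambda>t. F (xs[j := xs ! j + t]))
      (at 0 within {t. xs[j := xs ! j + t] \<in> S})"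

fun Ck :: "nat \<Rightarrow> real list set \<Rightarrow> (real list \<Rightarrow> complex) \<Rightarrow> bool" where
  "Ck 0 S F = lcont S F"
| "Ck (Suc k) S F = (lcont S F \<and>
      (\<forall>xs\<in>S. \<forall>j<length xs. (\<lambda>t. F (xs[j := xs ! j + t])) differentiable
            (at 0 within {t. xs[j := xs ! j + t] \<in> S})) \<and>
      (\<forall>j. Ck k S (pdir S j F)))"

definition smooth :: "real list set \<Rightarrow> (real list \<Rightarrow> complex) \<Rightarrow> bool" where
  "smooth S F \<longleftrightarrow> (\<forall>k. Ck k S F)"

definition permute_list :: "(nat \<Rightarrow> nat) \<Rightarrow> 'a list \<Rightarrow> 'a list" where
  "permute_list p xs = map (\<lambda>j. xs ! p j) [0..<length xs]"

definition full_field_algebra ::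
  "(complex \<Rightarrow> 'c::ab_group_add \<Rightarrow> 'c) \<Rightarrow> (real \<times> real \<Rightarrow> 'c \<Rightarrow> 'c) \<Rightarrow> ('c \<Rightarrow> 'c) \<Rightarrow> ('c \<Rightarrow> 'c)
   \<Rightarrow> ('c list \<Rightarrow> complex list \<Rightarrow> real \<times> real \<Rightarrow> 'c) \<Rightarrow> bool" where
  "full_field_algebra s P DL DR m \<longleftrightarrow>
     graded_vs s P \<and>
     \<comment> \<open>e^{2 pi i (d^L - d^R)} = id\<close>
     (\<forall>p q. (\<exists>v. P (p, q) v \<noteq> 0) \<longrightarrow> p - q \<in> \<int>) \<and>
     \<comment> \<open>D^L, D^R linear of weights (1,0), (0,1)\<close>
     Vector_Spaces.linear s s DL \<and> Vector_Spaces.linear s s DR \<and>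
     (\<forall>p q v. DL (P (p, q) v) \<in> range (P (p + 1, q)) \<and> DR (P (p, q) v) \<in> range (P (p, q + 1))) \<and>
     \<comment> \<open>values in the completion\<close>
     (\<forall>us zs. zs \<in> Mc (length us) \<longrightarrow> in_cpl P (m us zs)) \<and>
     \<comment> \<open>linearity in each u_j\<close>
     (\<forall>us zs i g. zs \<in> Mc (length us) \<longrightarrow> i < length us \<longrightarrow>
        Vector_Spaces.linear s s (\<lambda>u. m (us[i := u]) zs g)) \<and>
     \<comment> \<open>smoothness in the z_j (weakly, i.e. of all matrix coefficients)\<close>
     (\<forall>n us \<phi>. length us = n \<longrightarrow> rdual s P \<phi> \<longrightarrow>
        smooth (coords ` Mc n) (\<lambda>xs. pair P \<phi> (m us (decode xs)))) \<and>
     \<comment> \<open>identity and vacuum\<close>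
     (\<forall>u. m [u] [0] = emb P u) \<and>
     (\<exists>one. one \<in> range (P (0, 0)) \<and> m [] [] = emb P one) \<and>
     \<comment> \<open>convergence / associativity\<close>
     (\<forall>us zs vs ws i \<phi>. zs \<in> Mc (length us) \<longrightarrow> ws \<in> Mc (length vs) \<longrightarrow> i < length us \<longrightarrow>
        (\<forall>j<length zs. j \<noteq> i \<longrightarrow> (\<forall>w\<in>set ws. cmod w < cmod (zs ! i - zs ! j))) \<longrightarrow>
        rdual s P \<phi> \<longrightarrow>
        ((\<lambda>pq. pair P \<phi> (m (us[i := m vs ws pq]) zs)) has_sum
           pair P \<phi> (m (take i us @ vs @ drop (Suc i) us)
                         (take i zs @ map (\<lambda>w. zs ! i + w) ws @ drop (Suc i) zs))) UNIV) \<and>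
     \<comment> \<open>permutation invariance\<close>
     (\<forall>us zs p. zs \<in> Mc (length us) \<longrightarrow> bij_betw p {..<length us} {..<length us} \<longrightarrow>
        m (permute_list p us) (permute_list p zs) = m us zs) \<and>
     \<comment> \<open>scaling by e^{a d^L} e^{conj(a) d^R}\<close>
     (\<forall>a::complex. \<forall>us zs. zs \<in> Mc (length us) \<longrightarrow>
        gscale s (\<lambda>(p, q). exp (a * of_real p) * exp (cnj a * of_real q)) (m us zs) =
        m (map (gscaleV s P (\<lambda>(p, q). exp (a * of_real p) * exp (cnj a * of_real q))) us)
          (map (\<lambda>z. exp a * z) zs)) \<and>
     \<comment> \<open>translation by e^{a D^L} e^{conj(a) D^R}\<close>
     (\<forall>v. DL (DR v) = DR (DL v)) \<and>
     (\<forall>a::complex. \<forall>us zs \<phi>. zs \<in> Mc (length us) \<longrightarrow> rdual s P \<phi> \<longrightarrow>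
        ((\<lambda>(k, l). a ^ k * cnj a ^ l / (fact k * fact l) *
              pair P \<phi> ((extL DL ^^ k) ((extR DR ^^ l) (m us zs)))) has_sum
           pair P \<phi> (m us (map (\<lambda>z. z + a) zs))) (UNIV :: (nat \<times> nat) set))"

definition open_closed_field_algebra ::
  "(complex \<Rightarrow> 'c::ab_group_add \<Rightarrow> 'c) \<Rightarrow> (real \<times> real \<Rightarrow> 'c \<Rightarrow> 'c) \<Rightarrow> ('c \<Rightarrow> 'c) \<Rightarrow> ('c \<Rightarrow> 'c)
   \<Rightarrow> ('c list \<Rightarrow> complex list \<Rightarrow> real \<times> real \<Rightarrow> 'c)
   \<Rightarrow> (complex \<Rightarrow> 'o::ab_group_add \<Rightarrow> 'o) \<Rightarrow> (real \<Rightarrow> 'o \<Rightarrow> 'o) \<Rightarrow> ('o \<Rightarrow> 'o)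
   \<Rightarrow> ('c list \<Rightarrow> 'o list \<Rightarrow> complex list \<Rightarrow> real list \<Rightarrow> real \<Rightarrow> 'o) \<Rightarrow> bool" where
  "open_closed_field_algebra sc Pc DL DR mcl so Po D m \<longleftrightarrow>
     full_field_algebra sc Pc DL DR mcl \<and>
     graded_vs so Po \<and>
     \<comment> \<open>D_op linear of weight 1 (so that it acts on the completion)\<close>
     Vector_Spaces.linear so so D \<and>
     (\<forall>n v. D (Po n v) \<in> range (Po (n + 1))) \<and>
     \<comment> \<open>values in the completion\<close>
     (\<forall>us vs zs rs. zs \<in> MH (length us) \<longrightarrow> rs \<in> Lam (length vs) \<longrightarrow> in_cpl Po (m us vs zs rs)) \<and>
     \<comment> \<open>(1) linearity in the vectors\<close>
     (\<forall>us vs zs rs i g. zs \<in> MH (length us) \<longrightarrow> rs \<in> Lam (length vs) \<longrightarrow>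
        (i < length us \<longrightarrow> Vector_Spaces.linear sc so (\<lambda>u. m (us[i := u]) vs zs rs g)) \<and>
        (i < length vs \<longrightarrow> Vector_Spaces.linear so so (\<lambda>v. m us (vs[i := v]) zs rs g))) \<and>
     \<comment> \<open>(1) smoothness in the z_j and r_t (weakly)\<close>
     (\<forall>us vs \<phi>. rdual so Po \<phi> \<longrightarrow>
        smooth {coords zs @ rs | zs rs. zs \<in> MH (length us) \<and> rs \<in> Lam (length vs)}
          (\<lambda>xs. pair Po \<phi> (m us vs (decode (take (2 * length us) xs)) (drop (2 * length us) xs)))) \<and>
     \<comment> \<open>(2)\<close>
     (\<forall>v. m [] [v] [] [0] = emb Po v) \<and>
     (\<exists>one. one \<in> range (Po 0) \<and> m [] [] [] [] = emb Po one) \<and>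
     \<comment> \<open>(3a)\<close>
     (\<forall>us vs zs rs us' vs' ws ss i \<phi>.
        zs \<in> MH (length us) \<longrightarrow> rs \<in> Lam (length vs) \<longrightarrow>
        ws \<in> MH (length us') \<longrightarrow> ss \<in> Lam (length vs') \<longrightarrow> i < length vs \<longrightarrow>
        (\<forall>z\<in>set zs. (\<forall>w\<in>set ws. cmod w < cmod (z - of_real (rs ! i))) \<and>
                    (\<forall>s\<in>set ss. s < cmod (z - of_real (rs ! i)))) \<longrightarrow>
        (\<forall>t<length rs. t \<noteq> i \<longrightarrow> (\<forall>w\<in>set ws. cmod w < \<bar>rs ! t - rs ! i\<bar>) \<and>
                                   (\<forall>s\<in>set ss. s < \<bar>rs ! t - rs ! i\<bar>)) \<longrightarrow>
        rdual so Po \<phi> \<longrightarrow>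
        ((\<lambda>n. pair Po \<phi> (m us (vs[i := m us' vs' ws ss n]) zs rs)) has_sum
           pair Po \<phi> (m (us @ us') (take i vs @ vs' @ drop (Suc i) vs)
                          (zs @ map (\<lambda>w. of_real (rs ! i) + w) ws)
                          (take i rs @ map (\<lambda>s. rs ! i + s) ss @ drop (Suc i) rs))) UNIV) \<and>
     \<comment> \<open>(3b)\<close>
     (\<forall>us vs zs rs us' ws i \<phi>.
        zs \<in> MH (length us) \<longrightarrow> rs \<in> Lam (length vs) \<longrightarrow>
        ws \<in> Mc (length us') \<longrightarrow> i < length us \<longrightarrow>
        (\<forall>j<length zs. j \<noteq> i \<longrightarrow> (\<forall>w\<in>set ws. cmod w < cmod (zs ! j - zs ! i))) \<longrightarrow>
        (\<forall>r\<in>set rs. \<forall>w\<in>set ws. cmod w < cmod (of_real r - zs ! i)) \<longrightarrow>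
        (\<forall>w\<in>set ws. Im (zs ! i + w) > 0) \<longrightarrow>
        rdual so Po \<phi> \<longrightarrow>
        ((\<lambda>pq. pair Po \<phi> (m (us[i := mcl us' ws pq]) vs zs rs)) has_sum
           pair Po \<phi> (m (take i us @ us' @ drop (Suc i) us) vs
                          (take i zs @ map (\<lambda>w. zs ! i + w) ws @ drop (Suc i) zs) rs)) UNIV) \<and>
     \<comment> \<open>(4)\<close>
     (\<forall>us vs zs rs p. zs \<in> MH (length us) \<longrightarrow> rs \<in> Lam (length vs) \<longrightarrow>
        bij_betw p {..<length us} {..<length us} \<longrightarrow>
        m (permute_list p us) vs (permute_list p zs) rs = m us vs zs rs) \<and>
     \<comment> \<open>(5)\<close>
     (\<forall>a::real. \<forall>us vs zs rs. zs \<in> MH (length us) \<longrightarrow> rs \<in> Lam (length vs) \<longrightarrow>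
        gscale so (\<lambda>n. of_real (exp (a * n))) (m us vs zs rs) =
        m (map (gscaleV sc Pc (\<lambda>(p, q). of_real (exp (a * (p + q))))) us)
          (map (gscaleV so Po (\<lambda>n. of_real (exp (a * n)))) vs)
          (map (\<lambda>z. of_real (exp a) * z) zs) (map (\<lambda>r. exp a * r) rs)) \<and>
     \<comment> \<open>(6)\<close>
     (\<forall>a::real. \<forall>us vs zs rs \<phi>. zs \<in> MH (length us) \<longrightarrow> rs \<in> Lam (length vs) \<longrightarrow>
        (rs = [] \<or> last rs + a \<ge> 0) \<longrightarrow> rdual so Po \<phi> \<longrightarrow>
        ((\<lambda>k. of_real (a ^ k / fact k) * pair Po \<phi> ((extO D ^^ k) (m us vs zs rs))) has_sum
           pair Po \<phi> (m us vs (map (\<lambda>z. z + of_real a) zs) (map (\<lambda>r. r + a) rs))) UNIV)"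

text \<open>The vertex operator Y_{cl-op}(u; z, conj z) v = m^{(1;1)}(u; v; z, conj z; 0).\<close>

definition Ycl_op :: "('c list \<Rightarrow> 'o list \<Rightarrow> complex list \<Rightarrow> real list \<Rightarrow> real \<Rightarrow> 'o)
   \<Rightarrow> 'c \<Rightarrow> complex \<Rightarrow> 'o \<Rightarrow> real \<Rightarrow> 'o" where
  "Ycl_op m u z v = m [u] [v] [z] [0]"

end

theory Submission
  imports Defs
begin

lemma ps_deriv0:
  fixes c :: "nat \<Rightarrow> complex" and t0 :: real
  assumes t0: "t0 > 0" and sm: "(\<lambda>k. c k * of_real t0 ^ k) summable_on UNIV"
  shows "((\<lambda>t::real. \<Sum>k. c k * of_real t ^ k) has_vector_derivative c 1) (at 0)"
    and "\<And>t. \<bar>t\<bar> \<le> t0 \<Longrightarrow> ((\<lambda>k. c k * of_real t ^ k) has_sum (\<Sum>k. c k * of_real t ^ k)) UNIV"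
proof -
  have abs: "summable (\<lambda>k. norm (c k * of_real t0 ^ k))"
    using sm unfolding summable_on_iff_abs_summable_on_complex
    by (rule summable_on_imp_summable)
  show "((\<lambda>k. c k * of_real t ^ k) has_sum (\<Sum>k. c k * of_real t ^ k)) UNIV" if "\<bar>t\<bar> \<le> t0" for t
  proof -
    have "summable (\<lambda>k. norm (c k * of_real t ^ k))"
    proof (rule summable_comparison_test[OF _ abs])
      show "\<exists>N. \<forall>n\<ge>N. norm (norm (c n * complex_of_real t ^ n)) \<le> norm (c n * complex_of_real t0 ^ n)"
        using that t0 by (auto simp: norm_mult norm_power intro!: mult_left_mono power_mono)
    qed
    then have "(\<lambda>k. c k * of_real t ^ k) summable_on UNIV"
      by (rule norm_summable_imp_summable_on)
    then have h: "((\<lambda>k. c k * of_real t ^ k) has_sum infsum (\<lambda>k. c k * of_real t ^ k) UNIV) UNIV"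
      by (rule has_sum_infsum)
    then have "(\<lambda>k. c k * of_real t ^ k) sums infsum (\<lambda>k. c k * of_real t ^ k) UNIV"
      by (rule has_sum_imp_sums)
    then have "(\<Sum>k. c k * of_real t ^ k) = infsum (\<lambda>k. c k * of_real t ^ k) UNIV"
      by (rule sums_unique[symmetric])
    with h show ?thesis by simp
  qed
  have s: "summable (\<lambda>n. c n * (of_real t0::complex) ^ n)"
    using sm by (rule summable_on_imp_summable)
  have "DERIV (\<lambda>x. \<Sum>n. c n * x^n) 0 :> (\<Sum>n. diffs c n * 0^n)"
    by (rule termdiffs_strong[OF s]) (use t0 in simp)
  moreover have "(\<Sum>n. diffs c n * (0::complex)^n) = c 1"
    using powser_zero[of "diffs c"] by (simp add: diffs_def)
  ultimately have "DERIV (\<lambda>x. \<Sum>n. c n * x^n) (of_real 0) :> c 1" by simp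
  then show "((\<lambda>t::real. \<Sum>k. c k * of_real t ^ k) has_vector_derivative c 1) (at 0)"
    using has_vector_derivative_real_field by blast
qed

lemma ps_deriv_gen:
  fixes c :: "nat \<Rightarrow> complex" and F :: "real \<Rightarrow> complex"
  assumes d: "d > 0" and S: "0 \<in> S" "S \<subseteq> UNIV"
    and h: "\<And>t. t \<in> S \<Longrightarrow> \<bar>t\<bar> < d \<Longrightarrow> ((\<lambda>k. c k * of_real t ^ k) has_sum F t) UNIV"
    and t1: "d/2 \<in> S \<or> -(d/2) \<in> S"
  shows "(F has_vector_derivative c 1) (at 0 within S)"
proof -
  define t0 where "t0 = d/2"
  have t0: "t0 > 0" "t0 < d" using d by (auto simp: t0_def)
  have "(\<lambda>k. c k * of_real t0 ^ k) summable_on UNIV"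
  proof -
    obtain t where t: "t \<in> S" "\<bar>t\<bar> = t0" using t1 t0 by (auto simp: t0_def)
    then have "(\<lambda>k. c k * of_real t ^ k) summable_on UNIV"
      using h[of t] t0 by (auto simp: summable_on_def)
    then have "(\<lambda>k. norm (c k * of_real t ^ k)) summable_on UNIV"
      by (rule summable_on_iff_abs_summable_on_complex[THEN iffD1])
    moreover have "norm (c k * of_real t ^ k) = norm (c k * of_real t0 ^ k)" for k
      using t by (simp add: norm_mult norm_power)
    ultimately have "(\<lambda>k. norm (c k * of_real t0 ^ k)) summable_on UNIV" by simp
    then show ?thesis by (rule summable_on_iff_abs_summable_on_complex[THEN iffD2])
  qed
  note P = ps_deriv0[OF t0(1) this]
  have "((\<lambda>t::real. \<Sum>k. c k * of_real t ^ k) has_vector_derivative c 1) (at 0 within S)"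
    using P(1) by (rule has_vector_derivative_at_within)
  then show ?thesis
  proof (rule has_vector_derivative_transform_within[OF _ t0(1) S(1)])
    fix x' assume "x' \<in> S" "dist x' 0 < t0"
    then have "\<bar>x'\<bar> < t0" by simp
    then show "(\<Sum>k. c k * of_real x' ^ k) = F x'"
      using P(2)[of x'] h[of x'] \<open>x' \<in> S\<close> t0 has_sum_unique by fastforce
  qed
qed

lemma ps_deriv_right:
  fixes c :: "nat \<Rightarrow> complex" and F :: "real \<Rightarrow> complex"
  assumes d: "d > 0"
    and h: "\<And>t. 0 \<le> t \<Longrightarrow> t < d \<Longrightarrow> ((\<lambda>k. c k * of_real t ^ k) has_sum F t) UNIV"
  shows "(F has_vector_derivative c 1) (at 0 within {0..})"
  by (rule ps_deriv_gen[OF d]) (use d h in auto)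

lemma ps_deriv_two:
  fixes c :: "nat \<Rightarrow> complex" and F :: "real \<Rightarrow> complex"
  assumes d: "d > 0"
    and h: "\<And>t. \<bar>t\<bar> < d \<Longrightarrow> ((\<lambda>k. c k * of_real t ^ k) has_sum F t) UNIV"
  shows "(F has_vector_derivative c 1) (at 0)"
  using ps_deriv_gen[OF d, of UNIV c F] h by auto

lemma ps2_deriv:
  fixes a :: "nat \<Rightarrow> nat \<Rightarrow> complex" and F :: "real \<Rightarrow> complex"
  assumes d: "d > 0"
    and h: "\<And>t. \<bar>t\<bar> < d \<Longrightarrow> ((\<lambda>(k,l). a k l * of_real t ^ (k+l)) has_sum F t) UNIV"
  shows "(F has_vector_derivative (a 1 0 + a 0 1)) (at 0)"
proof -
  define b where "b N = (\<Sum>k\<le>N. a k (N-k))" for N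
  have "((\<lambda>N. b N * of_real t ^ N) has_sum F t) UNIV" if t: "\<bar>t\<bar> < d" for t
  proof (rule has_sum_SigmaD)
    let ?f = "\<lambda>(N,k). a k (N-k) * (of_real t::complex) ^ N"
    have bij: "bij_betw (\<lambda>(N::nat,k::nat). (k, N-k)) (Sigma UNIV (\<lambda>N. {..N})) UNIV"
      proof (rule bij_betw_byWitness[where f'="\<lambda>(k::nat,l::nat). (k+l, k)"])
    qed (auto simp: image_def intro!: exI[where x="(_ + _, _)"])
    have "((\<lambda>x. (\<lambda>(k,l). a k l * of_real t ^ (k+l)) ((\<lambda>(N,k). (k, N-k)) x)) has_sum F t) (Sigma UNIV (\<lambda>N. {..N}))"
      using has_sum_reindex_bij_betw[OF bij] h[OF t] by blast
    then show "(?f has_sum F t) (Sigma UNIV (\<lambda>N. {..N}))"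
      by (rule has_sum_cong[THEN iffD1, rotated]) auto
    show "((\<lambda>k. ?f (N, k)) has_sum b N * of_real t ^ N) {..N}" if "N \<in> UNIV" for N
      by (rule has_sum_finiteI) (auto simp: b_def sum_distrib_right)
  qed
  then have "(F has_vector_derivative b 1) (at 0)"
    by (intro ps_deriv_two[OF d]) auto
  moreover have "b 1 = a 1 0 + a 0 1" by (simp add: b_def)
  ultimately show ?thesis by simp
qed

lemma lin_zero: "Vector_Spaces.linear s1 s2 f \<Longrightarrow> f 0 = 0"
  using module_hom.zero linear_iff_module_hom by metis
lemma lin_add: "Vector_Spaces.linear s1 s2 f \<Longrightarrow> f (x + y) = f x + f y"
  using module_hom.add linear_iff_module_hom by metis
lemma lin_diff: "Vector_Spaces.linear s1 s2 f \<Longrightarrow> f (x - y) = f x - f y"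
  using module_hom.diff linear_iff_module_hom by metis
lemma lin_sum: "Vector_Spaces.linear s1 s2 f \<Longrightarrow> f (sum g S) = (\<Sum>a\<in>S. f (g a))"
  using module_hom.sum linear_iff_module_hom by metis
lemma lin_scale: "Vector_Spaces.linear s1 s2 f \<Longrightarrow> f (s1 c x) = s2 c (f x)"
  using module_hom.scale linear_iff_module_hom by metis
lemma lin_vs1: "Vector_Spaces.linear s1 s2 f \<Longrightarrow> Vector_Spaces.vector_space s1"
  by (simp add: Vector_Spaces.linear_iff)
lemma lin_vs2: "Vector_Spaces.linear s1 s2 f \<Longrightarrow> Vector_Spaces.vector_space s2"
  by (simp add: Vector_Spaces.linear_iff)
lemma lin_comp: "Vector_Spaces.linear s1 s2 f \<Longrightarrow> Vector_Spaces.linear s2 s3 g \<Longrightarrow>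
    Vector_Spaces.linear s1 s3 (\<lambda>x. g (f x))"
  using Vector_Spaces.linear_compose[of s1 s2 f s3 g] by (simp add: o_def)
lemma lin_funpow_zero: "Vector_Spaces.linear s1 s1 f \<Longrightarrow> (f ^^ k) 0 = 0"
  by (induction k) (auto simp: lin_zero)

lemma vs_complex: "Vector_Spaces.vector_space ((*) :: complex \<Rightarrow> complex \<Rightarrow> complex)"
  by (unfold_locales) (auto simp: algebra_simps)

lemma separate:
  fixes s :: "complex \<Rightarrow> 'v::ab_group_add \<Rightarrow> 'v"
  assumes vs: "Vector_Spaces.vector_space s" and x: "x \<noteq> 0"
  shows "\<exists>\<psi>. Vector_Spaces.linear s (*) \<psi> \<and> \<psi> x = 1"
proof -
  interpret vp: vector_space_pair s "(*) :: complex \<Rightarrow> complex \<Rightarrow> complex"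
    using vs vs_complex by (simp add: vector_space_pair_def)
  have ind: "vp.vs1.independent {x}"
    using x vp.vs1.independent_insertI[of x "{}"] vp.vs1.span_empty by auto
  show ?thesis
    by (intro exI[of _ "vp.construct {x} (\<lambda>_. 1)"] conjI vp.linear_construct ind vp.construct_basis) auto
qed

lemma lin_sum_fun:
  assumes "\<And>i. i \<in> I \<Longrightarrow> Vector_Spaces.linear s1 s2 (f i)" "Vector_Spaces.vector_space s1" "Vector_Spaces.vector_space s2"
  shows "Vector_Spaces.linear s1 s2 (\<lambda>x. \<Sum>i\<in>I. f i x)"
  unfolding Vector_Spaces.linear_iff using assms
  by (auto simp: lin_scale sum.distrib[symmetric] module.scale_sum_right module_iff_vector_space intro!: sum.cong lin_add)

section \<open>Graded spaces\<close>

lemma gv_vs: "graded_vs s P \<Longrightarrow> Vector_Spaces.vector_space s"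
  unfolding graded_vs_def by blast
lemma gv_lin: "graded_vs s P \<Longrightarrow> Vector_Spaces.linear s s (P g)"
  unfolding graded_vs_def by blast
lemma gv_PP: "graded_vs s P \<Longrightarrow> P g (P h v) = (if g = h then P g v else 0)"
  unfolding graded_vs_def by blast
lemma gv_fin: "graded_vs s P \<Longrightarrow> finite {g. P g v \<noteq> 0}"
  unfolding graded_vs_def by blast
lemma gv_decomp: "graded_vs s P \<Longrightarrow> v = (\<Sum>g\<in>{g. P g v \<noteq> 0}. P g v)"
  unfolding graded_vs_def by blast
lemma gv_range_same: "graded_vs s P \<Longrightarrow> x \<in> range (P g) \<Longrightarrow> P g x = x"
  using gv_PP[of s P g g] by auto
lemma gv_range_other: "graded_vs s P \<Longrightarrow> x \<in> range (P g) \<Longrightarrow> h \<noteq> g \<Longrightarrow> P h x = 0"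
  using gv_PP[of s P h g] by auto
lemma gv_range_P: "P g v \<in> range (P g)" by simp

lemma rdual_comp:
  assumes gv: "graded_vs s P" and hl: "Vector_Spaces.linear s (*) lf"
  shows "rdual s P (\<lambda>x. lf (P g0 x))"
proof -
  have z: "lf (P g0 (P g v)) = 0" if "g \<noteq> g0" for g v
    using that by (simp add: gv_PP[OF gv] lin_zero[OF hl])
  have "{g. \<exists>v. lf (P g0 (P g v)) \<noteq> 0} \<subseteq> {g0}"
    using z by blast
  then show ?thesis
    unfolding rdual_def using lin_comp[OF gv_lin[OF gv] hl] finite_subset by blast
qed

lemma pair_comp:
  assumes gv: "graded_vs s P" and hl: "Vector_Spaces.linear s (*) lf"
  shows "pair P (\<lambda>x. lf (P g0 x)) f = lf (P g0 (f g0))"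
proof -
  have z: "lf (P g0 (P g v)) = 0" if "g \<noteq> g0" for g v
    using that by (simp add: gv_PP[OF gv] lin_zero[OF hl])
  have sub: "{g. \<exists>v. lf (P g0 (P g v)) \<noteq> 0} \<subseteq> {g0}"
    using z by blast
  define G where "G = {g. \<exists>v. lf (P g0 (P g v)) \<noteq> 0}"
  have pd: "pair P (\<lambda>x. lf (P g0 x)) f = (\<Sum>g\<in>G. lf (P g0 (f g)))"
    unfolding pair_def G_def ..
  show ?thesis
  proof (cases "g0 \<in> G")
    case True
    then have "G = {g0}" using sub unfolding G_def by blast
    then show ?thesis using pd by simp
  next
    case False
    then have "G = {}" using sub unfolding G_def by blast
    moreover have "lf (P g0 (P g0 (f g0))) = 0" using False unfolding G_def by blast
    ultimately show ?thesis using pd gv_PP[OF gv, of g0 g0 "f g0"] by simp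
  qed
qed

lemma in_cpl_P: "graded_vs s P \<Longrightarrow> in_cpl P f \<Longrightarrow> P g (f g) = f g"
proof -
  assume a: "graded_vs s P" "in_cpl P f"
  then have "f g \<in> range (P g)" unfolding in_cpl_def by blast
  then show ?thesis using gv_range_same[OF a(1)] by blast
qed

lemma extL_pow: "((extL D ^^ k) f) (p, q) = (D ^^ k) (f (p - real k, q))"
proof (induction k arbitrary: p)
  case 0 then show ?case by simp
next
  case (Suc k)
  have "((extL D ^^ Suc k) f) (p, q) = D (((extL D ^^ k) f) (p - 1, q))"
    by (simp add: extL_def)
  also have "\<dots> = (D ^^ Suc k) (f (p - real (Suc k), q))"
    using Suc by (simp add: diff_diff_eq)
  finally show ?case .
qed

lemma extR_pow: "((extR D ^^ k) f) (p, q) = (D ^^ k) (f (p, q - real k))"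
proof (induction k arbitrary: q)
  case 0 then show ?case by simp
next
  case (Suc k)
  have "((extR D ^^ Suc k) f) (p, q) = D (((extR D ^^ k) f) (p, q - 1))"
    by (simp add: extR_def)
  also have "\<dots> = (D ^^ Suc k) (f (p, q - real (Suc k)))"
    using Suc by (simp add: diff_diff_eq)
  finally show ?case .
qed

lemma extO_pow: "((extO D ^^ k) f) n = (D ^^ k) (f (n - real k))"
proof (induction k arbitrary: n)
  case 0 then show ?case by simp
next
  case (Suc k)
  have "((extO D ^^ Suc k) f) n = D (((extO D ^^ k) f) (n - 1))"
    by (simp add: extO_def)
  also have "\<dots> = (D ^^ Suc k) (f (n - real (Suc k)))"
    using Suc by (simp add: diff_diff_eq)
  finally show ?case .
qed

lemma pair_lin:
  assumes r: "rdual s2 P \<phi>" and l: "\<And>g. Vector_Spaces.linear s1 s2 (\<lambda>x. F x g)"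
    and vs: "Vector_Spaces.vector_space s1"
  shows "Vector_Spaces.linear s1 (*) (\<lambda>x. pair P \<phi> (F x))"
  unfolding pair_def
proof (rule lin_sum_fun[OF _ vs vs_complex])
  fix g
  have "Vector_Spaces.linear s2 (*) \<phi>" using r by (simp add: rdual_def)
  then show "Vector_Spaces.linear s1 (*) (\<lambda>x. \<phi> (F x g))"
    using lin_comp[OF l] by blast
qed

lemma has_sum_single_nz:
  fixes f :: "'a \<Rightarrow> 'b::{topological_comm_monoid_add,t2_space}"
  assumes z: "\<And>x. x \<noteq> a \<Longrightarrow> f x = 0" and h: "(f has_sum y) UNIV"
  shows "y = f a"
proof -
  have "(f has_sum y) {a}"
    using h by (subst has_sum_cong_neutral[where T=UNIV and g=f]) (use z in auto)
  then show ?thesis by (simp add: has_sum_finite_iff)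
qed

lemma has_sum_all_zero:
  fixes f :: "'a \<Rightarrow> 'b::{topological_comm_monoid_add,t2_space}"
  assumes z: "\<And>x. f x = 0" and h: "(f has_sum y) A"
  shows "y = 0"
proof -
  have "f = (\<lambda>_. 0)" using z by auto
  then show ?thesis using h has_sum_unique has_sum_0_simp by metis
qed

lemma mvt_est:
  fixes g :: "real \<Rightarrow> complex"
  assumes d: "\<And>t. t \<in> {0..a} \<Longrightarrow> ((\<lambda>\<tau>. g (t + \<tau>)) has_vector_derivative g' t) (at 0)"
    and b: "\<And>t. t \<in> {0..a} \<Longrightarrow> norm (g' t - L) \<le> \<epsilon>" and a: "0 \<le> a"
  shows "norm (g a - g 0 - a *\<^sub>R L) \<le> \<epsilon> * a"
proof -
  have dg: "(g has_vector_derivative g' t) (at t)" if "t \<in> {0..a}" for t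
  proof -
    have i: "((\<lambda>s. s - t) has_vector_derivative 1) (at t)"
      by (auto intro!: derivative_eq_intros)
    have "(((\<lambda>\<tau>. g (t + \<tau>)) \<circ> (\<lambda>s. s - t)) has_vector_derivative (1 *\<^sub>R g' t)) (at t)"
      by (rule vector_diff_chain_at[OF i]) (use d[OF that] in simp)
    moreover have "((\<lambda>\<tau>. g (t + \<tau>)) \<circ> (\<lambda>s. s - t)) = g" by (auto simp: fun_eq_iff)
    ultimately show ?thesis by simp
  qed
  define h where "h s = g s - s *\<^sub>R L" for s
  have dh: "(h has_derivative (\<lambda>d. d *\<^sub>R (g' t - L))) (at t within {0..a})" if "t \<in> {0..a}" for t
  proof -
    have "(h has_vector_derivative (g' t - L)) (at t)"
      unfolding h_def using dg[OF that] by (auto intro!: derivative_eq_intros)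
    then show ?thesis
      unfolding has_vector_derivative_def by (rule has_derivative_at_withinI)
  qed
  have on: "onorm (\<lambda>d::real. d *\<^sub>R (g' t - L)) \<le> \<epsilon>" if "t \<in> {0..a}" for t
    using onorm_scaleR_left[OF bounded_linear_ident, of "g' t - L"] onorm_id[where 'a=real] b[OF that] by simp
  have "norm (h a - h 0) \<le> \<epsilon> * norm (a - 0)"
    by (rule differentiable_bound[OF convex_real_interval(5) dh on]) (use a in auto)
  then show ?thesis using a by (simp add: h_def algebra_simps)
qed


locale OC =
  fixes sc :: "complex \<Rightarrow> 'c::ab_group_add \<Rightarrow> 'c" and Pc :: "real \<times> real \<Rightarrow> 'c \<Rightarrow> 'c"
    and DL DR :: "'c \<Rightarrow> 'c" and mcl :: "'c list \<Rightarrow> complex list \<Rightarrow> real \<times> real \<Rightarrow> 'c"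
    and so :: "complex \<Rightarrow> 'o::ab_group_add \<Rightarrow> 'o" and Po :: "real \<Rightarrow> 'o \<Rightarrow> 'o"
    and D :: "'o \<Rightarrow> 'o" and m :: "'c list \<Rightarrow> 'o list \<Rightarrow> complex list \<Rightarrow> real list \<Rightarrow> real \<Rightarrow> 'o"
  assumes oc: "open_closed_field_algebra sc Pc DL DR mcl so Po D m"
begin

lemma ffa: "full_field_algebra sc Pc DL DR mcl"
  using oc unfolding open_closed_field_algebra_def by (elim conjE) assumption
lemma gvo: "graded_vs so Po"
  using oc unfolding open_closed_field_algebra_def by (elim conjE) assumption
lemma linD: "Vector_Spaces.linear so so D"
  using oc unfolding open_closed_field_algebra_def by (elim conjE) assumption
lemma wD: "\<forall>n v. D (Po n v) \<in> range (Po (n + 1))"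
  using oc unfolding open_closed_field_algebra_def by (elim conjE) assumption
lemma cplo: "\<forall>us vs zs rs. zs \<in> MH (length us) \<longrightarrow> rs \<in> Lam (length vs) \<longrightarrow> in_cpl Po (m us vs zs rs)"
  using oc unfolding open_closed_field_algebra_def by (elim conjE) assumption
lemma lino: "\<forall>us vs zs rs i g. zs \<in> MH (length us) \<longrightarrow> rs \<in> Lam (length vs) \<longrightarrow>
        (i < length us \<longrightarrow> Vector_Spaces.linear sc so (\<lambda>u. m (us[i := u]) vs zs rs g)) \<and>
        (i < length vs \<longrightarrow> Vector_Spaces.linear so so (\<lambda>v. m us (vs[i := v]) zs rs g))"
  using oc unfolding open_closed_field_algebra_def by (elim conjE) assumption
lemma smo: "\<forall>us vs \<phi>. rdual so Po \<phi> \<longrightarrow>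
        smooth {coords zs @ rs | zs rs. zs \<in> MH (length us) \<and> rs \<in> Lam (length vs)}
          (\<lambda>xs. pair Po \<phi> (m us vs (decode (take (2 * length us) xs)) (drop (2 * length us) xs)))"
  using oc unfolding open_closed_field_algebra_def by (elim conjE) assumption
lemma ido: "\<forall>v. m [] [v] [] [0] = emb Po v"
  using oc unfolding open_closed_field_algebra_def by (elim conjE) assumption
lemma a3a: "\<forall>us vs zs rs us' vs' ws ss i \<phi>.
        zs \<in> MH (length us) \<longrightarrow> rs \<in> Lam (length vs) \<longrightarrow>
        ws \<in> MH (length us') \<longrightarrow> ss \<in> Lam (length vs') \<longrightarrow> i < length vs \<longrightarrow>
        (\<forall>z\<in>set zs. (\<forall>w\<in>set ws. cmod w < cmod (z - of_real (rs ! i))) \<and>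
                    (\<forall>s\<in>set ss. s < cmod (z - of_real (rs ! i)))) \<longrightarrow>
        (\<forall>t<length rs. t \<noteq> i \<longrightarrow> (\<forall>w\<in>set ws. cmod w < \<bar>rs ! t - rs ! i\<bar>) \<and>
                                   (\<forall>s\<in>set ss. s < \<bar>rs ! t - rs ! i\<bar>)) \<longrightarrow>
        rdual so Po \<phi> \<longrightarrow>
        ((\<lambda>n. pair Po \<phi> (m us (vs[i := m us' vs' ws ss n]) zs rs)) has_sum
           pair Po \<phi> (m (us @ us') (take i vs @ vs' @ drop (Suc i) vs)
                          (zs @ map (\<lambda>w. of_real (rs ! i) + w) ws)
                          (take i rs @ map (\<lambda>s. rs ! i + s) ss @ drop (Suc i) rs))) UNIV"
  using oc unfolding open_closed_field_algebra_def by (elim conjE) assumption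
lemma a3b: "\<forall>us vs zs rs us' ws i \<phi>.
        zs \<in> MH (length us) \<longrightarrow> rs \<in> Lam (length vs) \<longrightarrow>
        ws \<in> Mc (length us') \<longrightarrow> i < length us \<longrightarrow>
        (\<forall>j<length zs. j \<noteq> i \<longrightarrow> (\<forall>w\<in>set ws. cmod w < cmod (zs ! j - zs ! i))) \<longrightarrow>
        (\<forall>r\<in>set rs. \<forall>w\<in>set ws. cmod w < cmod (of_real r - zs ! i)) \<longrightarrow>
        (\<forall>w\<in>set ws. Im (zs ! i + w) > 0) \<longrightarrow>
        rdual so Po \<phi> \<longrightarrow>
        ((\<lambda>pq. pair Po \<phi> (m (us[i := mcl us' ws pq]) vs zs rs)) has_sum
           pair Po \<phi> (m (take i us @ us' @ drop (Suc i) us) vs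
                          (take i zs @ map (\<lambda>w. zs ! i + w) ws @ drop (Suc i) zs) rs)) UNIV"
  using oc unfolding open_closed_field_algebra_def by (elim conjE) assumption
lemma a6: "\<forall>a::real. \<forall>us vs zs rs \<phi>. zs \<in> MH (length us) \<longrightarrow> rs \<in> Lam (length vs) \<longrightarrow>
        (rs = [] \<or> last rs + a \<ge> 0) \<longrightarrow> rdual so Po \<phi> \<longrightarrow>
        ((\<lambda>k. of_real (a ^ k / fact k) * pair Po \<phi> ((extO D ^^ k) (m us vs zs rs))) has_sum
           pair Po \<phi> (m us vs (map (\<lambda>z. z + of_real a) zs) (map (\<lambda>r. r + a) rs))) UNIV"
  using oc unfolding open_closed_field_algebra_def by (elim conjE) assumption

lemma gvc: "graded_vs sc Pc"
  using ffa unfolding full_field_algebra_def by (elim conjE) assumption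
lemma linDL: "Vector_Spaces.linear sc sc DL"
  using ffa unfolding full_field_algebra_def by (elim conjE) assumption
lemma linDR: "Vector_Spaces.linear sc sc DR"
  using ffa unfolding full_field_algebra_def by (elim conjE) assumption
lemma wLR: "\<forall>p q v. DL (Pc (p, q) v) \<in> range (Pc (p + 1, q)) \<and> DR (Pc (p, q) v) \<in> range (Pc (p, q + 1))"
  using ffa unfolding full_field_algebra_def by (elim conjE) assumption
lemma cplc: "\<forall>us zs. zs \<in> Mc (length us) \<longrightarrow> in_cpl Pc (mcl us zs)"
  using ffa unfolding full_field_algebra_def by (elim conjE) assumption
lemma idc: "\<forall>u. mcl [u] [0] = emb Pc u"
  using ffa unfolding full_field_algebra_def by (elim conjE) assumption
lemma transc: "\<forall>a::complex. \<forall>us zs \<phi>. zs \<in> Mc (length us) \<longrightarrow> rdual sc Pc \<phi> \<longrightarrow>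
        ((\<lambda>(k, l). a ^ k * cnj a ^ l / (fact k * fact l) *
              pair Pc \<phi> ((extL DL ^^ k) ((extR DR ^^ l) (mcl us zs)))) has_sum
           pair Pc \<phi> (mcl us (map (\<lambda>z. z + a) zs))) (UNIV :: (nat \<times> nat) set)"
  using ffa unfolding full_field_algebra_def by (elim conjE) assumption


lemma MH1[simp]: "[z] \<in> MH (Suc 0) \<longleftrightarrow> Im z > 0" by (simp add: MH_def Mc_def)
lemma MH0[simp]: "[] \<in> MH 0" by (simp add: MH_def Mc_def)
lemma Lam1[simp]: "[r] \<in> Lam (Suc 0) \<longleftrightarrow> r \<ge> 0" by (simp add: Lam_def)
lemma Lam0[simp]: "[] \<in> Lam 0" by (simp add: Lam_def)
lemma Mc1[simp]: "[w] \<in> Mc (Suc 0)" by (simp add: Mc_def)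

lemma wDL: "x \<in> range (Pc (p, q)) \<Longrightarrow> DL x \<in> range (Pc (p + 1, q))"
  using wLR by blast
lemma wDR: "x \<in> range (Pc (p, q)) \<Longrightarrow> DR x \<in> range (Pc (p, q + 1))"
  using wLR by blast
lemma wDo: "x \<in> range (Po n) \<Longrightarrow> D x \<in> range (Po (n + 1))"
  using wD by blast

lemma wDR_pow: "x \<in> range (Pc (p, q)) \<Longrightarrow> (DR ^^ l) x \<in> range (Pc (p, q + real l))"
proof (induction l)
  case 0 then show ?case by simp
next
  case (Suc l)
  then have "DR ((DR ^^ l) x) \<in> range (Pc (p, q + real l + 1))" by (intro wDR) auto
  then show ?case by (simp add: algebra_simps)
qed
lemma wDL_pow: "x \<in> range (Pc (p, q)) \<Longrightarrow> (DL ^^ k) x \<in> range (Pc (p + real k, q))"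
proof (induction k)
  case 0 then show ?case by simp
next
  case (Suc k)
  then have "DL ((DL ^^ k) x) \<in> range (Pc (p + real k + 1, q))" by (intro wDL) auto
  then show ?case by (simp add: algebra_simps)
qed
lemma wDo_pow: "x \<in> range (Po n) \<Longrightarrow> (D ^^ k) x \<in> range (Po (n + real k))"
proof (induction k)
  case 0 then show ?case by simp
next
  case (Suc k)
  then have "D ((D ^^ k) x) \<in> range (Po (n + real k + 1))" by (intro wDo) auto
  then show ?case by (simp add: algebra_simps)
qed

lemma mcl_comp_gen:
  assumes u: "u \<in> range (Pc h)" and hl: "Vector_Spaces.linear sc (*) lf"
  shows "((\<lambda>(k, l). w ^ k * cnj w ^ l / (fact k * fact l) *
            lf (Pc g0 ((DL ^^ k) ((DR ^^ l) (if (fst g0 - real k, snd g0 - real l) = h then u else 0)))))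
          has_sum lf (mcl [u] [w] g0)) UNIV"
proof -
  have r: "rdual sc Pc (\<lambda>x. lf (Pc g0 x))" by (rule rdual_comp[OF gvc hl])
  have t: "((\<lambda>(k, l). w ^ k * cnj w ^ l / (fact k * fact l) *
              pair Pc (\<lambda>x. lf (Pc g0 x)) ((extL DL ^^ k) ((extR DR ^^ l) (mcl [u] [0])))) has_sum
           pair Pc (\<lambda>x. lf (Pc g0 x)) (mcl [u] (map (\<lambda>z. z + w) [0]))) UNIV"
    using transc[rule_format, where a=w and us="[u]" and zs="[0]" and \<phi>="\<lambda>x. lf (Pc g0 x)"] r by simp
  have e1: "pair Pc (\<lambda>x. lf (Pc g0 x)) (mcl [u] (map (\<lambda>z. z + w) [0])) = lf (mcl [u] [w] g0)"
    using pair_comp[OF gvc hl] in_cpl_P[OF gvc] cplc by simp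
  have e2: "pair Pc (\<lambda>x. lf (Pc g0 x)) ((extL DL ^^ k) ((extR DR ^^ l) (mcl [u] [0]))) =
      lf (Pc g0 ((DL ^^ k) ((DR ^^ l) (if (fst g0 - real k, snd g0 - real l) = h then u else 0))))" for k l
  proof -
    obtain p q where g0: "g0 = (p, q)" by force
    have "Pc (p - real k, q - real l) u = (if (p - real k, q - real l) = h then u else 0)"
    proof (cases "(p - real k, q - real l) = h")
      case True
      then show ?thesis using gv_range_same[OF gvc u] by simp
    next
      case False
      then show ?thesis using gv_range_other[OF gvc u False] by simp
    qed
    then show ?thesis
      using idc pair_comp[OF gvc hl] by (simp add: g0 extL_pow extR_pow emb_def)
  qed
  show ?thesis using t unfolding e1 e2 .
qed


lemma mcl_comp_hit:
  assumes u: "u \<in> range (Pc h)" and hl: "Vector_Spaces.linear sc (*) lf"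
  shows "lf (mcl [u] [w] (fst h + real k0, snd h + real l0)) =
           w ^ k0 * cnj w ^ l0 / (fact k0 * fact l0) * lf ((DL ^^ k0) ((DR ^^ l0) u))"
proof -
  define g0 where "g0 = (fst h + real k0, snd h + real l0)"
  note H = mcl_comp_gen[OF u hl, of w g0]
  have eq: "(fst g0 - real k, snd g0 - real l) = h \<longleftrightarrow> (k, l) = (k0, l0)" for k l
    by (cases h) (auto simp: g0_def)
  have lPc: "Vector_Spaces.linear sc (*) (\<lambda>x. lf (Pc g0 x))"
    by (rule lin_comp[OF gv_lin[OF gvc] hl])
  have z: "(\<lambda>(k, l). w ^ k * cnj w ^ l / (fact k * fact l) *
            lf (Pc g0 ((DL ^^ k) ((DR ^^ l) (if (fst g0 - real k, snd g0 - real l) = h then u else 0))))) x = 0"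
    if "x \<noteq> (k0, l0)" for x
    using that eq[of "fst x" "snd x"] lin_funpow_zero[OF linDL] lin_funpow_zero[OF linDR] lin_zero[OF lPc]
    by (cases x) auto
  have "lf (mcl [u] [w] g0) = w ^ k0 * cnj w ^ l0 / (fact k0 * fact l0) * lf (Pc g0 ((DL ^^ k0) ((DR ^^ l0) u)))"
    using has_sum_single_nz[OF z H] eq by simp
  moreover have "Pc g0 ((DL ^^ k0) ((DR ^^ l0) u)) = (DL ^^ k0) ((DR ^^ l0) u)"
  proof -
    obtain p q where hpq: "h = (p, q)" by force
    have "(DL ^^ k0) ((DR ^^ l0) u) \<in> range (Pc g0)"
      using wDL_pow[OF wDR_pow[of u p q l0]] u by (simp add: hpq g0_def)
    then show ?thesis using gv_range_same[OF gvc] by blast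
  qed
  ultimately show ?thesis by (simp add: g0_def)
qed

lemma mcl_comp_miss:
  assumes u: "u \<in> range (Pc h)" and hl: "Vector_Spaces.linear sc (*) lf"
    and g0: "g0 \<notin> range (\<lambda>(k::nat, l::nat). (fst h + real k, snd h + real l))"
  shows "lf (mcl [u] [w] g0) = 0"
proof -
  note H = mcl_comp_gen[OF u hl, of w g0]
  have ne: "(fst g0 - real k, snd g0 - real l) \<noteq> h" for k l
  proof
    assume "(fst g0 - real k, snd g0 - real l) = h"
    then have "g0 = (fst h + real k, snd h + real l)" by (cases g0, cases h) auto
    then show False using g0 by auto
  qed
  have lPc: "Vector_Spaces.linear sc (*) (\<lambda>x. lf (Pc g0 x))"
    by (rule lin_comp[OF gv_lin[OF gvc] hl])
  show ?thesis
    by (rule has_sum_all_zero[OF _ H])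
      (use ne lin_funpow_zero[OF linDL] lin_funpow_zero[OF linDR] lin_zero[OF lPc] in auto)
qed

lemma mcl_series:
  assumes u: "u \<in> range (Pc h)" and hl: "Vector_Spaces.linear sc (*) lf"
    and H: "((\<lambda>pq. lf (mcl [u] [w] pq)) has_sum X) UNIV"
  shows "((\<lambda>(k, l). w ^ k * cnj w ^ l / (fact k * fact l) * lf ((DL ^^ k) ((DR ^^ l) u))) has_sum X) UNIV"
proof -
  define j where "j = (\<lambda>(k::nat, l::nat). (fst h + real k, snd h + real l))"
  have inj: "inj j" unfolding j_def inj_def by auto
  have "((\<lambda>pq. lf (mcl [u] [w] pq)) has_sum X) (range j)"
    using H by (subst has_sum_cong_neutral[where T=UNIV and g="\<lambda>pq. lf (mcl [u] [w] pq)"])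
      (use mcl_comp_miss[OF u hl] in \<open>auto simp: j_def\<close>)
  then have "(((\<lambda>pq. lf (mcl [u] [w] pq)) \<circ> j) has_sum X) UNIV"
    using has_sum_reindex[OF inj_on_subset[OF inj subset_UNIV]] by blast
  moreover have "((\<lambda>pq. lf (mcl [u] [w] pq)) \<circ> j) = (\<lambda>(k, l). w ^ k * cnj w ^ l / (fact k * fact l) * lf ((DL ^^ k) ((DR ^^ l) u)))"
    using mcl_comp_hit[OF u hl] by (auto simp: j_def fun_eq_iff)
  ultimately show ?thesis by simp
qed


lemma mo_comp_gen:
  assumes v: "v \<in> range (Po h)" and hl: "Vector_Spaces.linear so (*) lf" and s: "s \<ge> 0"
  shows "((\<lambda>k. of_real (s ^ k / fact k) * lf (Po n ((D ^^ k) (if n - real k = h then v else 0))))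
          has_sum lf (m [] [v] [] [s] n)) UNIV"
proof -
  have r: "rdual so Po (\<lambda>x. lf (Po n x))" by (rule rdual_comp[OF gvo hl])
  have t: "((\<lambda>k. of_real (s ^ k / fact k) * pair Po (\<lambda>x. lf (Po n x)) ((extO D ^^ k) (m [] [v] [] [0]))) has_sum
           pair Po (\<lambda>x. lf (Po n x)) (m [] [v] (map (\<lambda>z. z + of_real s) []) (map (\<lambda>r. r + s) [0]))) UNIV"
    using a6[rule_format, where a=s and us="[]" and vs="[v]" and zs="[]" and rs="[0]" and \<phi>="\<lambda>x. lf (Po n x)"] r s
    by simp
  have e1: "pair Po (\<lambda>x. lf (Po n x)) (m [] [v] (map (\<lambda>z. z + of_real s) []) (map (\<lambda>r. r + s) [0])) = lf (m [] [v] [] [s] n)"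
    using pair_comp[OF gvo hl] in_cpl_P[OF gvo] cplo s by simp
  have e2: "pair Po (\<lambda>x. lf (Po n x)) ((extO D ^^ k) (m [] [v] [] [0])) =
      lf (Po n ((D ^^ k) (if n - real k = h then v else 0)))" for k
  proof -
    have "Po (n - real k) v = (if n - real k = h then v else 0)"
    proof (cases "n - real k = h")
      case True
      then show ?thesis using gv_range_same[OF gvo v] by simp
    next
      case False
      then show ?thesis using gv_range_other[OF gvo v False] by simp
    qed
    then show ?thesis
      using ido pair_comp[OF gvo hl] by (simp add: extO_pow emb_def)
  qed
  show ?thesis using t unfolding e1 e2 .
qed

lemma mo_series:
  assumes v: "v \<in> range (Po h)" and hl: "Vector_Spaces.linear so (*) lf" and s: "s \<ge> 0"
    and H: "((\<lambda>n. lf (m [] [v] [] [s] n)) has_sum X) UNIV"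
  shows "((\<lambda>k. of_real (s ^ k / fact k) * lf ((D ^^ k) v)) has_sum X) UNIV"
proof -
  define j where "j = (\<lambda>k::nat. h + real k)"
  have inj: "inj j" unfolding j_def inj_def by auto
  have lP: "Vector_Spaces.linear so (*) (\<lambda>x. lf (Po n x))" for n
    by (rule lin_comp[OF gv_lin[OF gvo] hl])
  have miss: "lf (m [] [v] [] [s] n) = 0" if "n \<notin> range j" for n
  proof -
    have ne: "n - real k \<noteq> h" for k using that by (auto simp: j_def)
    show ?thesis
      by (rule has_sum_all_zero[OF _ mo_comp_gen[OF v hl s, of n]])
        (use ne lin_funpow_zero[OF linD] lin_zero[OF lP] in auto)
  qed
  have hit: "lf (m [] [v] [] [s] (h + real k0)) = of_real (s ^ k0 / fact k0) * lf ((D ^^ k0) v)" for k0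
  proof -
    define n where "n = h + real k0"
    have z: "(\<lambda>k. of_real (s ^ k / fact k) * lf (Po n ((D ^^ k) (if n - real k = h then v else 0)))) x = 0"
      if "x \<noteq> k0" for x
      using that lin_funpow_zero[OF linD] lin_zero[OF lP] by (auto simp: n_def)
    have "lf (m [] [v] [] [s] n) = of_real (s ^ k0 / fact k0) * lf (Po n ((D ^^ k0) v))"
      using has_sum_single_nz[OF z mo_comp_gen[OF v hl s, of n]] by (simp add: n_def)
    moreover have "Po n ((D ^^ k0) v) = (D ^^ k0) v"
      using gv_range_same[OF gvo wDo_pow[OF v]] by (simp add: n_def)
    ultimately show ?thesis by (simp add: n_def)
  qed
  have "((\<lambda>n. lf (m [] [v] [] [s] n)) has_sum X) (range j)"
    using H by (subst has_sum_cong_neutral[where T=UNIV and g="\<lambda>n. lf (m [] [v] [] [s] n)"])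
      (use miss in auto)
  then have "(((\<lambda>n. lf (m [] [v] [] [s] n)) \<circ> j) has_sum X) UNIV"
    using has_sum_reindex[OF inj_on_subset[OF inj subset_UNIV]] by blast
  moreover have "((\<lambda>n. lf (m [] [v] [] [s] n)) \<circ> j) = (\<lambda>k. of_real (s ^ k / fact k) * lf ((D ^^ k) v))"
    using hit by (auto simp: j_def fun_eq_iff)
  ultimately show ?thesis by simp
qed


lemma lin_u:
  assumes r: "rdual so Po \<phi>" and zs: "zs \<in> MH (Suc 0)" and rs: "rs \<in> Lam (Suc 0)"
  shows "Vector_Spaces.linear sc (*) (\<lambda>x. pair Po \<phi> (m [x] [v] zs rs))"
proof (rule pair_lin[OF r _ gv_vs[OF gvc]])
  fix g
  show "Vector_Spaces.linear sc so (\<lambda>x. m [x] [v] zs rs g)"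
    using lino[rule_format, where us="[u0]" and vs="[v]" and zs=zs and rs=rs and i=0 and g=g for u0] zs rs
    by simp
qed

lemma lin_v:
  assumes r: "rdual so Po \<phi>" and zs: "zs \<in> MH (Suc 0)" and rs: "rs \<in> Lam (Suc 0)"
  shows "Vector_Spaces.linear so (*) (\<lambda>x. pair Po \<phi> (m [u] [x] zs rs))"
proof (rule pair_lin[OF r _ gv_vs[OF gvo]])
  fix g
  show "Vector_Spaces.linear so so (\<lambda>x. m [u] [x] zs rs g)"
    using lino[rule_format, where us="[u]" and vs="[v0]" and zs=zs and rs=rs and i=0 and g=g for v0] zs rs
    by simp
qed

lemma closed_series:
  assumes u: "u \<in> range (Pc h)" and r: "rdual so Po \<phi>" and z: "Im z > 0" and w: "cmod w < Im z"
  shows "((\<lambda>(k, l). w ^ k * cnj w ^ l / (fact k * fact l) * pair Po \<phi> (m [(DL ^^ k) ((DR ^^ l) u)] [v] [z] [0]))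
           has_sum pair Po \<phi> (m [u] [v] [z + w] [0])) UNIV"
proof (rule mcl_series[OF u lin_u[OF r]])
  show "[z] \<in> MH (Suc 0)" using z by simp
  show "[0] \<in> Lam (Suc 0)" by simp
  have c1: "cmod w < cmod (of_real 0 - z)" using w abs_Im_le_cmod[of z] by simp
  have c2: "Im (z + w) > 0" using w abs_Im_le_cmod[of w] by (simp add: abs_le_iff)
  show "((\<lambda>pq. pair Po \<phi> (m [mcl [u] [w] pq] [v] [z] [0])) has_sum pair Po \<phi> (m [u] [v] [z + w] [0])) UNIV"
    using a3b[rule_format, where us="[u]" and vs="[v]" and zs="[z]" and rs="[0]" and us'="[u]" and ws="[w]"
        and i=0 and \<phi>=\<phi>] z r c1 c2 by simp
qed


lemma deriv_dir_h:
  assumes u: "u \<in> range (Pc h)" and r: "rdual so Po \<phi>" and z: "Im z > 0" and e: "cmod e = 1"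
  shows "((\<lambda>t. pair Po \<phi> (m [u] [v] [z + e * of_real t] [0])) has_vector_derivative
           (e * pair Po \<phi> (m [DL u] [v] [z] [0]) + cnj e * pair Po \<phi> (m [DR u] [v] [z] [0]))) (at 0)"
proof -
  define a where "a k l = e ^ k * cnj e ^ l / (fact k * fact l) * pair Po \<phi> (m [(DL ^^ k) ((DR ^^ l) u)] [v] [z] [0])" for k l
  have "((\<lambda>t. pair Po \<phi> (m [u] [v] [z + e * of_real t] [0])) has_vector_derivative (a 1 0 + a 0 1)) (at 0)"
  proof (rule ps2_deriv[OF z])
    fix t :: real assume t: "\<bar>t\<bar> < Im z"
    have w: "cmod (e * of_real t) < Im z" using t e by (simp add: norm_mult)
    note S = closed_series[OF u r z w, of v]
    have eq: "(\<lambda>(k, l). (e * of_real t) ^ k * cnj (e * of_real t) ^ l / (fact k * fact l) *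
                pair Po \<phi> (m [(DL ^^ k) ((DR ^^ l) u)] [v] [z] [0])) =
              (\<lambda>(k, l). a k l * of_real t ^ (k + l))"
      by (auto simp: fun_eq_iff a_def power_mult_distrib power_add field_simps)
    show "((\<lambda>(k, l). a k l * of_real t ^ (k + l)) has_sum pair Po \<phi> (m [u] [v] [z + e * of_real t] [0])) UNIV"
      using S unfolding eq .
  qed
  moreover have "a 1 0 + a 0 1 = e * pair Po \<phi> (m [DL u] [v] [z] [0]) + cnj e * pair Po \<phi> (m [DR u] [v] [z] [0])"
    by (simp add: a_def)
  ultimately show ?thesis by simp
qed

lemma deriv_dir:
  assumes r: "rdual so Po \<phi>" and z: "Im z > 0" and e: "cmod e = 1"
  shows "((\<lambda>t. pair Po \<phi> (m [u] [v] [z + e * of_real t] [0])) has_vector_derivative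
           (e * pair Po \<phi> (m [DL u] [v] [z] [0]) + cnj e * pair Po \<phi> (m [DR u] [v] [z] [0]))) (at 0)"
proof -
  define G where "G = {g. Pc g u \<noteq> 0}"
  have ud: "u = (\<Sum>g\<in>G. Pc g u)" unfolding G_def by (rule gv_decomp[OF gvc])
  define lf where "lf = (\<lambda>x. pair Po \<phi> (m [x] [v] [z] [0]))"
  have llf: "Vector_Spaces.linear sc (*) lf" unfolding lf_def by (rule lin_u[OF r]) (use z in auto)
  have "((\<lambda>t. \<Sum>g\<in>G. pair Po \<phi> (m [Pc g u] [v] [z + e * of_real t] [0])) has_vector_derivative
      (\<Sum>g\<in>G. e * pair Po \<phi> (m [DL (Pc g u)] [v] [z] [0]) + cnj e * pair Po \<phi> (m [DR (Pc g u)] [v] [z] [0]))) (at 0)"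
    by (rule has_vector_derivative_sum, rule deriv_dir_h[OF gv_range_P r z e])
  moreover have "(\<Sum>g\<in>G. e * pair Po \<phi> (m [DL (Pc g u)] [v] [z] [0]) + cnj e * pair Po \<phi> (m [DR (Pc g u)] [v] [z] [0]))
      = e * pair Po \<phi> (m [DL u] [v] [z] [0]) + cnj e * pair Po \<phi> (m [DR u] [v] [z] [0])"
  proof -
    have "lf (DL u) = (\<Sum>g\<in>G. lf (DL (Pc g u)))"
      by (subst ud) (simp add: lin_sum[OF linDL] lin_sum[OF llf])
    moreover have "lf (DR u) = (\<Sum>g\<in>G. lf (DR (Pc g u)))"
      by (subst ud) (simp add: lin_sum[OF linDR] lin_sum[OF llf])
    ultimately show ?thesis by (simp add: lf_def sum.distrib sum_distrib_left)
  qed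
  ultimately have d: "((\<lambda>t. \<Sum>g\<in>G. pair Po \<phi> (m [Pc g u] [v] [z + e * of_real t] [0])) has_vector_derivative
      (e * pair Po \<phi> (m [DL u] [v] [z] [0]) + cnj e * pair Po \<phi> (m [DR u] [v] [z] [0]))) (at 0)" by simp
  show ?thesis
  proof (rule has_vector_derivative_transform_within[OF d z])
    show "(0::real) \<in> UNIV" by simp
    fix t :: real assume "t \<in> UNIV" "dist t 0 < Im z"
    then have t: "\<bar>t\<bar> < Im z" by simp
    have n: "cmod (e * of_real t) < Im z" using t e by (simp add: norm_mult)
    have "Im (z + e * of_real t) > 0"
      using n abs_Im_le_cmod[of "e * of_real t"] unfolding plus_complex.sel by linarith
    then have l2: "Vector_Spaces.linear sc (*) (\<lambda>x. pair Po \<phi> (m [x] [v] [z + e * of_real t] [0]))"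
      by (intro lin_u[OF r]) auto
    show "(\<Sum>g\<in>G. pair Po \<phi> (m [Pc g u] [v] [z + e * of_real t] [0])) = pair Po \<phi> (m [u] [v] [z + e * of_real t] [0])"
      by (subst (2) ud) (simp add: lin_sum[OF l2])
  qed
qed


lemma open_series:
  assumes v: "v \<in> range (Po h)" and r: "rdual so Po \<phi>" and z: "Im z > 0" and s: "0 \<le> s" "s < cmod z"
  shows "((\<lambda>k. of_real (s ^ k / fact k) * pair Po \<phi> (m [u] [(D ^^ k) v] [z] [0]))
           has_sum pair Po \<phi> (m [u] [v] [z] [s])) UNIV"
proof (rule mo_series[OF v lin_v[OF r] s(1)])
  show "[z] \<in> MH (Suc 0)" using z by simp
  show "[0] \<in> Lam (Suc 0)" by simp
  show "((\<lambda>n. pair Po \<phi> (m [u] [m [] [v] [] [s] n] [z] [0])) has_sum pair Po \<phi> (m [u] [v] [z] [s])) UNIV"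
    using a3a[rule_format, where us="[u]" and vs="[v]" and zs="[z]" and rs="[0]" and us'="[]" and vs'="[v]"
        and ws="[]" and ss="[s]" and i=0 and \<phi>=\<phi>] z r s by simp
qed

lemma H_deriv_h:
  assumes v: "v \<in> range (Po h)" and r: "rdual so Po \<phi>" and z: "Im z > 0"
  shows "((\<lambda>s. pair Po \<phi> (m [u] [v] [z] [s])) has_vector_derivative pair Po \<phi> (m [u] [D v] [z] [0])) (at 0 within {0..})"
proof -
  have zp: "cmod z > 0" using z by auto
  define c where "c k = pair Po \<phi> (m [u] [(D ^^ k) v] [z] [0]) / fact k" for k
  have "((\<lambda>s. pair Po \<phi> (m [u] [v] [z] [s])) has_vector_derivative c 1) (at 0 within {0..})"
  proof (rule ps_deriv_right[OF zp])
    fix t :: real assume t: "0 \<le> t" "t < cmod z"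
    have eq: "(\<lambda>k. of_real (t ^ k / fact k) * pair Po \<phi> (m [u] [(D ^^ k) v] [z] [0])) = (\<lambda>k. c k * of_real t ^ k)"
      by (auto simp: fun_eq_iff c_def)
    show "((\<lambda>k. c k * of_real t ^ k) has_sum pair Po \<phi> (m [u] [v] [z] [t])) UNIV"
      using open_series[OF v r z t, of u] unfolding eq .
  qed
  then show ?thesis by (simp add: c_def)
qed

lemma H_deriv:
  assumes r: "rdual so Po \<phi>" and z: "Im z > 0"
  shows "((\<lambda>s. pair Po \<phi> (m [u] [v] [z] [s])) has_vector_derivative pair Po \<phi> (m [u] [D v] [z] [0])) (at 0 within {0..})"
proof -
  have zp: "cmod z > 0" using z by auto
  define G where "G = {g. Po g v \<noteq> 0}"
  have vd: "v = (\<Sum>g\<in>G. Po g v)" unfolding G_def by (rule gv_decomp[OF gvo])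
  have l0: "Vector_Spaces.linear so (*) (\<lambda>x. pair Po \<phi> (m [u] [x] [z] [0]))" by (rule lin_v[OF r]) (use z in auto)
  have "((\<lambda>s. \<Sum>g\<in>G. pair Po \<phi> (m [u] [Po g v] [z] [s])) has_vector_derivative
      (\<Sum>g\<in>G. pair Po \<phi> (m [u] [D (Po g v)] [z] [0]))) (at 0 within {0..})"
    by (rule has_vector_derivative_sum, rule H_deriv_h[OF gv_range_P r z])
  moreover have "(\<Sum>g\<in>G. pair Po \<phi> (m [u] [D (Po g v)] [z] [0])) = pair Po \<phi> (m [u] [D v] [z] [0])"
    by (subst (2) vd) (simp add: lin_sum[OF linD] lin_sum[OF l0])
  ultimately have d: "((\<lambda>s. \<Sum>g\<in>G. pair Po \<phi> (m [u] [Po g v] [z] [s])) has_vector_derivative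
      pair Po \<phi> (m [u] [D v] [z] [0])) (at 0 within {0..})" by simp
  show ?thesis
  proof (rule has_vector_derivative_transform_within[OF d zp])
    show "(0::real) \<in> {0..}" by simp
    fix s :: real assume s: "s \<in> {0..}" "dist s 0 < cmod z"
    then have l2: "Vector_Spaces.linear so (*) (\<lambda>x. pair Po \<phi> (m [u] [x] [z] [s]))"
      by (intro lin_v[OF r]) (use z in auto)
    show "(\<Sum>g\<in>G. pair Po \<phi> (m [u] [Po g v] [z] [s])) = pair Po \<phi> (m [u] [v] [z] [s])"
      by (subst (2) vd) (simp add: lin_sum[OF l2])
  qed
qed

lemma F_deriv:
  assumes r: "rdual so Po \<phi>" and z: "Im z > 0"
  shows "((\<lambda>a. pair Po \<phi> (m [u] [v] [z + of_real a] [a])) has_vector_derivative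
            pair Po \<phi> (extO D (m [u] [v] [z] [0]))) (at 0 within {0..})"
proof -
  define c where "c k = pair Po \<phi> ((extO D ^^ k) (m [u] [v] [z] [0])) / fact k" for k
  have "((\<lambda>a. pair Po \<phi> (m [u] [v] [z + of_real a] [a])) has_vector_derivative c 1) (at 0 within {0..})"
  proof (rule ps_deriv_right[of 1])
    fix t :: real assume t: "0 \<le> t" "t < 1"
    have eq: "(\<lambda>k. of_real (t ^ k / fact k) * pair Po \<phi> ((extO D ^^ k) (m [u] [v] [z] [0]))) = (\<lambda>k. c k * of_real t ^ k)"
      by (auto simp: fun_eq_iff c_def)
    have "((\<lambda>k. of_real (t ^ k / fact k) * pair Po \<phi> ((extO D ^^ k) (m [u] [v] [z] [0]))) has_sum
           pair Po \<phi> (m [u] [v] [z + of_real t] [t])) UNIV"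
      using a6[rule_format, where a=t and us="[u]" and vs="[v]" and zs="[z]" and rs="[0]" and \<phi>=\<phi>] z r t
      by simp
    then show "((\<lambda>k. c k * of_real t ^ k) has_sum pair Po \<phi> (m [u] [v] [z + of_real t] [t])) UNIV"
      unfolding eq .
  qed simp
  then show ?thesis by (simp add: c_def)
qed


lemma smooth_est:
  assumes r: "rdual so Po \<phi>" and z: "Im z > 0" and ep: "\<epsilon> > 0"
  shows "\<exists>\<delta>>0. \<forall>a. 0 < a \<and> a < \<delta> \<longrightarrow>
     norm (pair Po \<phi> (m [u] [v] [z + of_real a] [a]) - pair Po \<phi> (m [u] [v] [z] [a]) -
       a *\<^sub>R (pair Po \<phi> (m [DL u] [v] [z] [0]) + pair Po \<phi> (m [DR u] [v] [z] [0]))) \<le> \<epsilon> * a"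
proof -
  define S where "S = {coords zs @ rs | zs rs. zs \<in> MH (length [u]) \<and> rs \<in> Lam (length [v])}"
  define f where "f = (\<lambda>xs. pair Po \<phi> (m [u] [v] (decode (take (2 * length [u]) xs)) (drop (2 * length [u]) xs)))"
  have "smooth S f" unfolding S_def f_def
    by (rule smo[rule_format, where us="[u]" and vs="[v]" and \<phi>=\<phi>, OF r])
  then have C1: "Ck (Suc 0) S f" unfolding smooth_def by blast
  then have lc: "lcont S (pdir S 0 f)" by simp
  from C1 have dif: "\<forall>xs\<in>S. \<forall>j<length xs. (\<lambda>t. f (xs[j := xs ! j + t])) differentiable
            (at 0 within {t. xs[j := xs ! j + t] \<in> S})" by simp
  have memS: "[x', y', r'] \<in> S" if "y' > 0" "r' \<ge> 0" for x' y' r'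
  proof -
    have "[x', y', r'] = coords [Complex x' y'] @ [r']" by (simp add: coords_def)
    moreover have "[Complex x' y'] \<in> MH (length [u])" "[r'] \<in> Lam (length [v])" using that by auto
    ultimately show ?thesis unfolding S_def by blast
  qed
  have fval: "f [x', y', r'] = pair Po \<phi> (m [u] [v] [Complex x' y'] [r'])" for x' y' r'
    by (simp add: f_def decode_def)
  have dd: "((\<lambda>t. f [x' + t, y', r']) has_vector_derivative pdir S 0 f [x', y', r']) (at 0)"
    if "y' > 0" "r' \<ge> 0" for x' y' r'
  proof -
    have U: "{t. [x' + t, y', r'] \<in> S} = UNIV" using memS that by auto
    have "\<forall>j<length [x', y', r']. (\<lambda>t. f ([x', y', r'][j := [x', y', r'] ! j + t])) differentiable
            (at 0 within {t. [x', y', r'][j := [x', y', r'] ! j + t] \<in> S})"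
      by (rule bspec[OF dif memS[OF that]])
    then have "(\<lambda>t. f ([x', y', r'][0 := [x', y', r'] ! 0 + t])) differentiable
            (at 0 within {t. [x', y', r'][0 := [x', y', r'] ! 0 + t] \<in> S})"
    proof -
      have "(0::nat) < length [x', y', r']" by simp
      then show ?thesis using \<open>\<forall>j<length [x', y', r']. _\<close> by blast
    qed
    then have "(\<lambda>t. f [x' + t, y', r']) differentiable (at 0)"
      using U by simp
    then have "((\<lambda>t. f [x' + t, y', r']) has_vector_derivative vector_derivative (\<lambda>t. f [x' + t, y', r']) (at 0)) (at 0)"
      by (rule vector_derivative_works[THEN iffD1])
    moreover have "pdir S 0 f [x', y', r'] = vector_derivative (\<lambda>t. f [x' + t, y', r']) (at 0)"
      unfolding pdir_def using U by (simp del: U)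
    ultimately show ?thesis by simp
  qed
  define x where "x = Re z"
  define y where "y = Im z"
  have y: "y > 0" using z by (simp add: y_def)
  have zc: "Complex (x + t) y = z + 1 * of_real t" for t by (simp add: x_def y_def complex_eq_iff)
  define L where "L = pdir S 0 f [x, y, 0]"
  have L: "L = pair Po \<phi> (m [DL u] [v] [z] [0]) + pair Po \<phi> (m [DR u] [v] [z] [0])"
  proof -
    have "((\<lambda>t. f [x + t, y, 0]) has_vector_derivative
            (1 * pair Po \<phi> (m [DL u] [v] [z] [0]) + cnj 1 * pair Po \<phi> (m [DR u] [v] [z] [0]))) (at 0)"
      using deriv_dir[OF r z, of 1 u v] by (simp add: fval zc)
    moreover have "((\<lambda>t. f [x + t, y, 0]) has_vector_derivative L) (at 0)"
      unfolding L_def by (rule dd[OF y]) simp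
    ultimately show ?thesis using vector_derivative_at by (metis complex_cnj_one mult_1)
  qed
  obtain \<delta> where dp: "\<delta> > 0" and dl: "\<forall>ys\<in>S. (length ys = length [x, y, 0::real] \<and>
      (\<forall>j<length [x, y, 0::real]. \<bar>ys ! j - [x, y, 0] ! j\<bar> < \<delta>)) \<longrightarrow> cmod (pdir S 0 f ys - L) < \<epsilon>"
  proof -
    have "\<forall>e>0. \<exists>d>0. \<forall>ys\<in>S. (length ys = length [x, y, 0::real] \<and>
      (\<forall>j<length [x, y, 0::real]. \<bar>ys ! j - [x, y, 0] ! j\<bar> < d)) \<longrightarrow> cmod (pdir S 0 f ys - pdir S 0 f [x, y, 0]) < e"
    proof -
      have m0: "[x, y, 0] \<in> S" using memS y by simp
      show ?thesis using lc[unfolded lcont_def] m0 by (rule bspec)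
    qed
    then show ?thesis using ep that unfolding L_def by blast
  qed
  show ?thesis
  proof (intro exI[of _ \<delta>] conjI allI impI dp)
    fix a :: real assume a: "0 < a \<and> a < \<delta>"
    have est: "norm (f [x + a, y, a] - f [x + 0, y, a] - a *\<^sub>R L) \<le> \<epsilon> * a"
    proof (rule mvt_est[where g="\<lambda>t. f [x + t, y, a]" and g'="\<lambda>t. pdir S 0 f [x + t, y, a]"])
      fix t assume t: "t \<in> {0..a}"
      have "((\<lambda>\<tau>. f [x + t + \<tau>, y, a]) has_vector_derivative pdir S 0 f [x + t, y, a]) (at 0)"
        using dd[OF y, of a "x + t"] a by simp
      then show "((\<lambda>\<tau>. f [x + (t + \<tau>), y, a]) has_vector_derivative pdir S 0 f [x + t, y, a]) (at 0)"
        by (simp add: add.assoc)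
      have "[x + t, y, a] \<in> S" using memS[OF y] a by simp
      moreover have "\<bar>[x + t, y, a] ! j - [x, y, 0] ! j\<bar> < \<delta>" if "j < 3" for j
      proof -
        have "j = 0 \<or> j = 1 \<or> j = 2" using that by auto
        then show ?thesis using t a dp by auto
      qed
      ultimately have "cmod (pdir S 0 f [x + t, y, a] - L) < \<epsilon>" using dl by simp
      then show "norm (pdir S 0 f [x + t, y, a] - L) \<le> \<epsilon>" by simp
    qed (use a in simp)
    have e1: "f [x + a, y, a] = pair Po \<phi> (m [u] [v] [z + of_real a] [a])"
      using zc[of a] by (simp add: fval)
    have e2: "f [x + 0, y, a] = pair Po \<phi> (m [u] [v] [z] [a])"
      using zc[of 0] by (simp add: fval)
    show "norm (pair Po \<phi> (m [u] [v] [z + of_real a] [a]) - pair Po \<phi> (m [u] [v] [z] [a]) -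
       a *\<^sub>R (pair Po \<phi> (m [DL u] [v] [z] [0]) + pair Po \<phi> (m [DR u] [v] [z] [0]))) \<le> \<epsilon> * a"
      using est unfolding e1 e2 L .
  qed
qed


lemma vd_eps:
  assumes "(F has_vector_derivative c) (at 0 within {0..})" and "e > 0"
  shows "\<exists>d>0. \<forall>a. 0 < a \<and> a < d \<longrightarrow> norm (F a - F 0 - a *\<^sub>R c) \<le> e * a"
proof -
  have "(F has_derivative (\<lambda>x. x *\<^sub>R c)) (at 0 within {0..})"
    using assms(1) unfolding has_vector_derivative_def .
  then have "\<forall>e>0. \<exists>d>0. \<forall>y\<in>{0..}. norm (y - 0) < d \<longrightarrow> norm (F y - F 0 - (y - 0) *\<^sub>R c) \<le> e * norm (y - 0)"
    unfolding has_derivative_within_alt by blast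
  then obtain d where "d > 0" "\<forall>y\<in>{0..}. norm (y - 0) < d \<longrightarrow> norm (F y - F 0 - (y - 0) *\<^sub>R c) \<le> e * norm (y - 0)"
    using assms(2) by blast
  then show ?thesis by (intro exI[of _ d]) auto
qed

lemma main_eq:
  assumes r: "rdual so Po \<phi>" and z: "Im z > 0"
  shows "pair Po \<phi> (extO D (m [u] [v] [z] [0])) =
         pair Po \<phi> (m [DL u] [v] [z] [0]) + pair Po \<phi> (m [DR u] [v] [z] [0]) + pair Po \<phi> (m [u] [D v] [z] [0])"
proof -
  define c1 where "c1 = pair Po \<phi> (extO D (m [u] [v] [z] [0]))"
  define L where "L = pair Po \<phi> (m [DL u] [v] [z] [0]) + pair Po \<phi> (m [DR u] [v] [z] [0])"
  define K where "K = pair Po \<phi> (m [u] [D v] [z] [0])"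
  define F where "F a = pair Po \<phi> (m [u] [v] [z + of_real a] [a])" for a :: real
  define H where "H a = pair Po \<phi> (m [u] [v] [z] [a])" for a :: real
  have FH0: "F 0 = H 0" by (simp add: F_def H_def)
  have Fd: "(F has_vector_derivative c1) (at 0 within {0..})"
    unfolding F_def c1_def by (rule F_deriv[OF r z])
  have Hd: "(H has_vector_derivative K) (at 0 within {0..})"
    unfolding H_def K_def by (rule H_deriv[OF r z])
  have bound: "norm (c1 - L - K) \<le> 3 * e" if e: "e > 0" for e
  proof -
    obtain d1 where d1: "d1 > 0" "\<forall>a. 0 < a \<and> a < d1 \<longrightarrow> norm (F a - F 0 - a *\<^sub>R c1) \<le> e * a"
      using vd_eps[OF Fd e] by blast
    obtain d2 where d2: "d2 > 0" "\<forall>a. 0 < a \<and> a < d2 \<longrightarrow> norm (H a - H 0 - a *\<^sub>R K) \<le> e * a"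
      using vd_eps[OF Hd e] by blast
    obtain d3 where d3: "d3 > 0" "\<forall>a. 0 < a \<and> a < d3 \<longrightarrow> norm (F a - H a - a *\<^sub>R L) \<le> e * a"
      using smooth_est[OF r z e, of u v] unfolding F_def H_def L_def by blast
    define a where "a = min (min d1 d2) d3 / 2"
    have a: "0 < a" "a < d1" "a < d2" "a < d3" using d1 d2 d3 by (auto simp: a_def)
    have n1: "norm (F a - F 0 - a *\<^sub>R c1) \<le> e * a" using d1 a by blast
    have n2: "norm (H a - H 0 - a *\<^sub>R K) \<le> e * a" using d2 a by blast
    have n3: "norm (F a - H a - a *\<^sub>R L) \<le> e * a" using d3 a by blast
    have eq: "a *\<^sub>R (c1 - L - K) = (F a - H a - a *\<^sub>R L) + (H a - H 0 - a *\<^sub>R K) - (F a - F 0 - a *\<^sub>R c1)"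
      using FH0 by (simp add: algebra_simps)
    have "norm (a *\<^sub>R (c1 - L - K)) \<le> norm (F a - H a - a *\<^sub>R L) + norm (H a - H 0 - a *\<^sub>R K) + norm (F a - F 0 - a *\<^sub>R c1)"
      unfolding eq by (meson norm_triangle_ineq4 norm_triangle_ineq order_trans add_mono order_refl)
    also have "\<dots> \<le> 3 * e * a" using n1 n2 n3 by simp
    finally have "a * norm (c1 - L - K) \<le> 3 * e * a" using a by simp
    then show ?thesis using a by simp
  qed
  have "c1 - L - K = 0"
  proof (rule ccontr)
    assume ne: "c1 - L - K \<noteq> 0"
    then have "norm (c1 - L - K) \<le> 3 * (norm (c1 - L - K) / 6)" by (intro bound) simp
    then show False using ne by simp
  qed
  then show ?thesis unfolding c1_def L_def K_def by (simp add: algebra_simps)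
qed

end

theorem proposition1p12:
  fixes sc :: "complex \<Rightarrow> 'c::ab_group_add \<Rightarrow> 'c" and Pc :: "real \<times> real \<Rightarrow> 'c \<Rightarrow> 'c"
    and DL DR :: "'c \<Rightarrow> 'c" and mcl :: "'c list \<Rightarrow> complex list \<Rightarrow> real \<times> real \<Rightarrow> 'c"
    and so :: "complex \<Rightarrow> 'o::ab_group_add \<Rightarrow> 'o" and Po :: "real \<Rightarrow> 'o \<Rightarrow> 'o"
    and D :: "'o \<Rightarrow> 'o" and m :: "'c list \<Rightarrow> 'o list \<Rightarrow> complex list \<Rightarrow> real list \<Rightarrow> real \<Rightarrow> 'o"
    and u :: 'c and z :: complex
  assumes "open_closed_field_algebra sc Pc DL DR mcl so Po D m"
    and "Im z > 0"
  shows "(\<forall>v. (\<lambda>n. extO D (Ycl_op m u z v) n - Ycl_op m u z (D v) n) = Ycl_op m (DL u + DR u) z v) \<and>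
         (\<forall>v \<phi>. rdual so Po \<phi> \<longrightarrow>
           (\<exists>px py. ((\<lambda>t::real. pair Po \<phi> (Ycl_op m u (z + of_real t) v)) has_vector_derivative px) (at 0) \<and>
                    ((\<lambda>t::real. pair Po \<phi> (Ycl_op m u (z + \<i> * of_real t) v)) has_vector_derivative py) (at 0) \<and>
                    pair Po \<phi> (Ycl_op m (DL u) z v) = (px - \<i> * py) / 2 \<and>
                    pair Po \<phi> (Ycl_op m (DR u) z v) = (px + \<i> * py) / 2))"
proof -
  interpret OC sc Pc DL DR mcl so Po D m by (rule OC.intro) (rule assms(1))
  note z = assms(2)
  have P1: "extO D (Ycl_op m u z v) n - Ycl_op m u z (D v) n = Ycl_op m (DL u + DR u) z v n" for v n
  proof (rule ccontr)
    define W where "W = extO D (Ycl_op m u z v) n - Ycl_op m u z (D v) n - Ycl_op m (DL u + DR u) z v n"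
    assume "\<not> ?thesis"
    then have "W \<noteq> 0" unfolding W_def by simp
    then obtain \<psi> where l\<psi>: "Vector_Spaces.linear so (*) \<psi>" and \<psi>1: "\<psi> W = 1"
      using separate[OF gv_vs[OF gvo]] by blast
    define \<phi> where "\<phi> = (\<lambda>x. \<psi> (Po n x))"
    have r: "rdual so Po \<phi>" unfolding \<phi>_def by (rule rdual_comp[OF gvo l\<psi>])
    have pc: "pair Po \<phi> F = \<psi> (Po n (F n))" for F unfolding \<phi>_def by (rule pair_comp[OF gvo l\<psi>])
    have cp: "in_cpl Po (m [x] [w] [z] [0])" for x w using cplo z by simp
    have e1: "pair Po \<phi> (m [x] [w] [z] [0]) = \<psi> (m [x] [w] [z] [0] n)" for x w
      using pc in_cpl_P[OF gvo cp] by simp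
    have e2: "pair Po \<phi> (extO D (m [u] [v] [z] [0])) = \<psi> (extO D (m [u] [v] [z] [0]) n)"
    proof -
      have "m [u] [v] [z] [0] (n - 1) \<in> range (Po (n - 1))" using cp[of u v] unfolding in_cpl_def by blast
      from wDo[OF this] have "D (m [u] [v] [z] [0] (n - 1)) \<in> range (Po n)" by simp
      from gv_range_same[OF gvo this] show ?thesis unfolding pc by (simp add: extO_def)
    qed
    have lin: "m [DL u + DR u] [v] [z] [0] n = m [DL u] [v] [z] [0] n + m [DR u] [v] [z] [0] n"
    proof -
      have "Vector_Spaces.linear sc so (\<lambda>x. m ([u][0 := x]) [v] [z] [0] n)"
        using lino[rule_format, where us="[u]" and vs="[v]" and zs="[z]" and rs="[0]" and i=0 and g=n] z by simp
      from lin_add[OF this, of "DL u" "DR u"] show ?thesis by simp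
    qed
    have "\<psi> (extO D (m [u] [v] [z] [0]) n) = \<psi> (m [DL u] [v] [z] [0] n) + \<psi> (m [DR u] [v] [z] [0] n) + \<psi> (m [u] [D v] [z] [0] n)"
      using main_eq[OF r z, of u v] unfolding e1 e2 .
    then have "\<psi> W = 0"
      unfolding W_def Ycl_op_def lin by (simp add: lin_diff[OF l\<psi>] lin_add[OF l\<psi>])
    then show False using \<psi>1 by simp
  qed
  have P2: "\<exists>px py. ((\<lambda>t::real. pair Po \<phi> (Ycl_op m u (z + of_real t) v)) has_vector_derivative px) (at 0) \<and>
                    ((\<lambda>t::real. pair Po \<phi> (Ycl_op m u (z + \<i> * of_real t) v)) has_vector_derivative py) (at 0) \<and>
                    pair Po \<phi> (Ycl_op m (DL u) z v) = (px - \<i> * py) / 2 \<and>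
                    pair Po \<phi> (Ycl_op m (DR u) z v) = (px + \<i> * py) / 2"
    if r: "rdual so Po \<phi>" for v \<phi>
  proof -
    define A where "A = pair Po \<phi> (m [DL u] [v] [z] [0])"
    define B where "B = pair Po \<phi> (m [DR u] [v] [z] [0])"
    have dx: "((\<lambda>t::real. pair Po \<phi> (Ycl_op m u (z + of_real t) v)) has_vector_derivative (A + B)) (at 0)"
      using deriv_dir[OF r z, of 1 u v] by (simp add: Ycl_op_def A_def B_def)
    have dy: "((\<lambda>t::real. pair Po \<phi> (Ycl_op m u (z + \<i> * of_real t) v)) has_vector_derivative (\<i> * A - \<i> * B)) (at 0)"
      using deriv_dir[OF r z, of \<i> u v] by (simp add: Ycl_op_def A_def B_def)
    show ?thesis
    proof (intro exI conjI)
      show "pair Po \<phi> (Ycl_op m (DL u) z v) = ((A + B) - \<i> * (\<i> * A - \<i> * B)) / 2"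
        by (simp add: Ycl_op_def A_def algebra_simps)
      show "pair Po \<phi> (Ycl_op m (DR u) z v) = ((A + B) + \<i> * (\<i> * A - \<i> * B)) / 2"
        by (simp add: Ycl_op_def B_def algebra_simps)
    qed (rule dx, rule dy)
  qed
  show ?thesis
  proof (intro conjI allI impI)
    fix v
    show "(\<lambda>n. extO D (Ycl_op m u z v) n - Ycl_op m u z (D v) n) = Ycl_op m (DL u + DR u) z v"
      using P1[of v] by (intro ext) simp
  next
    fix v \<phi> assume "rdual so Po \<phi>"
    then show "\<exists>px py. ((\<lambda>t::real. pair Po \<phi> (Ycl_op m u (z + of_real t) v)) has_vector_derivative px) (at 0) \<and>
                    ((\<lambda>t::real. pair Po \<phi> (Ycl_op m u (z + \<i> * of_real t) v)) has_vector_derivative py) (at 0) \<and>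
                    pair Po \<phi> (Ycl_op m (DL u) z v) = (px - \<i> * py) / 2 \<and>
                    pair Po \<phi> (Ycl_op m (DR u) z v) = (px + \<i> * py) / 2"
      by (rule P2)
  qed
qed

end
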